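(* Fix unlabeled samples $S_1,\dots,S_T$, where $S_i=(x^i_1,\dots,x^i_n)$. Fix a set $I\subseteq\{1,\dots,T\}$ with $|I|=k$ and fix weights $\alpha^1,\dots,\alpha^T\in\Lambda^I$. Let $\mathcal{H}$ have VC dimension $d$ with $1\le d\le m\le n$. For each $i\in I$, let $\overline{S}_i$ be a uniformly random subset of $m$ of the $n$ points of $S_i$, chosen without replacement, independently over $i\in I$. Then for every $\delta\in(0,1)$, with probability at least $1-\delta/4$ over the choice of the $\overline{S}_i$, the following holds simultaneously for all $h_1,\dots,h_T\in\mathcal{H}$: $$\frac1T\sum_{t=1}^T\tilde{\mathrm{er}}_{\alpha^t}(h_t)\le\frac1T\sum_{t=1}^T\widehat{\mathrm{er}}_{\alpha^t}(h_t)+\frac1T\|\alpha\|_{2,1}\sqrt{\frac{2d\log(ekm/d)}{m}}+\frac1T\|\alpha\|_{1,2}\sqrt{\frac{\log(4/\delta)}{2m}}.$$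
   Context: Labeling functions $f_i:\mathcal{X}\to\{-1,1\}$ are given, and $\ell$ is the $0/1$-loss. Weight sets: $\Lambda^I=\{\alpha\in[0,1]^T:\sum_i\alpha_i=1,\ \alpha_i=0\text{ for }i\notin I\}$. Empirical errors: - $\tilde{\mathrm{er}}_i(h)=\frac1n\sum_{j=1}^n\ell(h(x^i_j),f_i(x^i_j))$; - $\widehat{\mathrm{er}}_i(h)=\frac1m\sum_{x\in\overline{S}_i}\ell(h(x),f_i(x))$; - for $\alpha\in\Lambda^I$, $\tilde{\mathrm{er}}_\alpha=\sum_{i\in I}\alpha_i\tilde{\mathrm{er}}_i$ and $\widehat{\mathrm{er}}_\alpha=\sum_{i\in I}\alpha_i\widehat{\mathrm{er}}_i$. Mixed norms: $\|\alpha\|_{2,1}=\sum_{t=1}^T\sqrt{\sum_{i\in I}(\alpha^t_i)^2}$ and $\|\alpha\|_{1,2}=\sqrt{\sum_{i\in I}(\sum_{t=1}^T\alpha^t_i)^2}$. *)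

theory Defs
  imports "HOL-Probability.Probability"
begin

text \<open>Labels in {-1,1} are represented by bool (True ~ 1, False ~ -1).\<close>

definition zero_one_loss :: "bool \<Rightarrow> bool \<Rightarrow> real" where
  "zero_one_loss a b = (if a = b then 0 else 1)"

definition shatters :: "('x \<Rightarrow> bool) set \<Rightarrow> 'x set \<Rightarrow> bool" where
  "shatters H A \<longleftrightarrow> (\<forall>B \<subseteq> A. \<exists>h\<in>H. {x \<in> A. h x} = B)"

definition has_vc_dim :: "('x \<Rightarrow> bool) set \<Rightarrow> nat \<Rightarrow> bool" where
  "has_vc_dim H d \<longleftrightarrow>
     (\<exists>A. finite A \<and> card A = d \<and> shatters H A) \<and>
     (\<forall>A. finite A \<and> shatters H A \<longrightarrow> card A \<le> d)"

definition Lambda :: "nat \<Rightarrow> nat set \<Rightarrow> (nat \<Rightarrow> real) set" where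
  "Lambda T I = {a. (\<forall>i<T. 0 \<le> a i \<and> a i \<le> 1) \<and> (\<Sum>i<T. a i) = 1 \<and>
                    (\<forall>i<T. i \<notin> I \<longrightarrow> a i = 0)}"

text \<open>Samples: S i j is the point x^i_j, for task i < T and j < n.\<close>
definition err_full :: "(nat \<Rightarrow> nat \<Rightarrow> 'x) \<Rightarrow> (nat \<Rightarrow> 'x \<Rightarrow> bool) \<Rightarrow> nat \<Rightarrow> nat \<Rightarrow> ('x \<Rightarrow> bool) \<Rightarrow> real" where
  "err_full S f n i h = (1 / real n) * (\<Sum>j<n. zero_one_loss (h (S i j)) (f i (S i j)))"

definition err_sub :: "(nat \<Rightarrow> nat \<Rightarrow> 'x) \<Rightarrow> (nat \<Rightarrow> 'x \<Rightarrow> bool) \<Rightarrow> nat \<Rightarrow> nat set \<Rightarrow> nat \<Rightarrow> ('x \<Rightarrow> bool) \<Rightarrow> real" where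
  "err_sub S f m J i h = (1 / real m) * (\<Sum>j\<in>J. zero_one_loss (h (S i j)) (f i (S i j)))"

definition err_full_w :: "(nat \<Rightarrow> nat \<Rightarrow> 'x) \<Rightarrow> (nat \<Rightarrow> 'x \<Rightarrow> bool) \<Rightarrow> nat \<Rightarrow> nat set \<Rightarrow> (nat \<Rightarrow> real) \<Rightarrow> ('x \<Rightarrow> bool) \<Rightarrow> real" where
  "err_full_w S f n I a h = (\<Sum>i\<in>I. a i * err_full S f n i h)"

definition err_sub_w :: "(nat \<Rightarrow> nat \<Rightarrow> 'x) \<Rightarrow> (nat \<Rightarrow> 'x \<Rightarrow> bool) \<Rightarrow> nat \<Rightarrow> (nat \<Rightarrow> nat set) \<Rightarrow> nat set \<Rightarrow> (nat \<Rightarrow> real) \<Rightarrow> ('x \<Rightarrow> bool) \<Rightarrow> real" where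
  "err_sub_w S f m J I a h = (\<Sum>i\<in>I. a i * err_sub S f m (J i) i h)"

text \<open>Mixed norms of alpha = (alpha^1..alpha^T), alpha t i = alpha^t_i.\<close>
definition norm_21 :: "nat \<Rightarrow> nat set \<Rightarrow> (nat \<Rightarrow> nat \<Rightarrow> real) \<Rightarrow> real" where
  "norm_21 T I \<alpha> = (\<Sum>t<T. sqrt (\<Sum>i\<in>I. (\<alpha> t i)\<^sup>2))"

definition norm_12 :: "nat \<Rightarrow> nat set \<Rightarrow> (nat \<Rightarrow> nat \<Rightarrow> real) \<Rightarrow> real" where
  "norm_12 T I \<alpha> = sqrt (\<Sum>i\<in>I. (\<Sum>t<T. \<alpha> t i)\<^sup>2)"

definition subsample_pmf :: "nat set \<Rightarrow> nat \<Rightarrow> nat \<Rightarrow> (nat \<Rightarrow> nat set) pmf" where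
  "subsample_pmf I n m = Pi_pmf I {} (\<lambda>_. pmf_of_set {J. J \<subseteq> {..<n} \<and> card J = m})"

end

theory Submission
  imports Defs
begin


definition avg :: "'a set \<Rightarrow> ('a \<Rightarrow> real) \<Rightarrow> real" where
  "avg A g = (\<Sum>x\<in>A. g x) / real (card A)"

lemma avg_cong: "(\<And>x. x \<in> A \<Longrightarrow> g x = h x) \<Longrightarrow> avg A g = avg A h"
  unfolding avg_def by (simp cong: sum.cong)

lemma avg_const: "finite A \<Longrightarrow> A \<noteq> {} \<Longrightarrow> avg A (\<lambda>_. c) = c"
  unfolding avg_def by simp

lemma avg_mono: "(\<And>x. x \<in> A \<Longrightarrow> g x \<le> h x) \<Longrightarrow> avg A g \<le> avg A h"
  unfolding avg_def by (intro divide_right_mono sum_mono) auto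

lemma avg_add: "avg A (\<lambda>x. g x + h x) = avg A g + avg A h"
  unfolding avg_def by (simp add: sum.distrib add_divide_distrib)

lemma avg_diff: "avg A (\<lambda>x. g x - h x) = avg A g - avg A h"
  unfolding avg_def by (simp add: sum_subtractf diff_divide_distrib)

lemma avg_cmult: "avg A (\<lambda>x. c * g x) = c * avg A g"
  unfolding avg_def by (simp add: sum_distrib_left)

lemma avg_uminus: "avg A (\<lambda>x. - g x) = - avg A g"
  unfolding avg_def by (simp add: sum_negf)

lemma avg_sum: "avg A (\<lambda>x. \<Sum>j\<in>J. g j x) = (\<Sum>j\<in>J. avg A (g j))"
  unfolding avg_def by (simp add: sum.swap[of _ J A] sum_divide_distrib)

lemma avg_swap: "avg A (\<lambda>x. avg B (\<lambda>y. g x y)) = avg B (\<lambda>y. avg A (\<lambda>x. g x y))"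
  unfolding avg_def by (simp add: sum_divide_distrib[symmetric] sum.swap[of _ A B])

lemma avg_nonneg: "(\<And>x. x \<in> A \<Longrightarrow> 0 \<le> g x) \<Longrightarrow> 0 \<le> avg A g"
  unfolding avg_def by (intro divide_nonneg_nonneg sum_nonneg) auto

lemma avg_reindex: "bij_betw \<phi> A B \<Longrightarrow> avg B g = avg A (\<lambda>x. g (\<phi> x))"
  unfolding avg_def by (simp add: bij_betw_same_card sum.reindex_bij_betw)

lemma avg_ge_elem:
  assumes "finite A" "x \<in> A" "\<And>y. y \<in> A \<Longrightarrow> 0 \<le> g y"
  shows "g x / real (card A) \<le> avg A g"
  unfolding avg_def using assms by (intro divide_right_mono member_le_sum) auto

lemma PiE_dflt_insert_bij:
  assumes "i \<notin> I"
  shows "bij_betw (\<lambda>(v,g). g(i:=v)) (B i \<times> PiE_dflt I d B) (PiE_dflt (insert i I) d B)"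
proof -
  have "inj_on (\<lambda>(v,g). g(i:=v)) (B i \<times> PiE_dflt I d B)"
  proof (rule inj_onI, clarify)
    fix v g v' g' assume *: "v \<in> B i" "g \<in> PiE_dflt I d B" "v' \<in> B i" "g' \<in> PiE_dflt I d B"
      "g(i := v) = g'(i := v')"
    then have "v = v'" by (metis fun_upd_same)
    moreover have "g = g'"
    proof
      fix x show "g x = g' x"
      proof (cases "x = i")
        case True then show ?thesis using * assms by (auto simp: PiE_dflt_def)
      next
        case False then show ?thesis using *(5) by (metis fun_upd_other)
      qed
    qed
    ultimately show "v = v' \<and> g = g'" by simp
  qed
  moreover have "(\<lambda>(v,g). g(i:=v)) ` (B i \<times> PiE_dflt I d B) = PiE_dflt (insert i I) d B"
  proof (intro equalityI subsetI)
    fix y assume "y \<in> (\<lambda>(v,g). g(i:=v)) ` (B i \<times> PiE_dflt I d B)"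
    then show "y \<in> PiE_dflt (insert i I) d B" by (auto simp: PiE_dflt_def)
  next
    fix y assume y: "y \<in> PiE_dflt (insert i I) d B"
    have "(y i, y(i := d)) \<in> B i \<times> PiE_dflt I d B" using y assms by (auto simp: PiE_dflt_def)
    moreover have "y = (\<lambda>(v,g). g(i:=v)) (y i, y(i := d))" by simp
    ultimately show "y \<in> (\<lambda>(v,g). g(i:=v)) ` (B i \<times> PiE_dflt I d B)" by blast
  qed
  ultimately show ?thesis by (simp add: bij_betw_def)
qed

lemma avg_PiE_insert:
  assumes "finite I" "i \<notin> I" "\<And>x. x \<in> insert i I \<Longrightarrow> finite (B x)"
  shows "avg (PiE_dflt (insert i I) d B) F = avg (B i) (\<lambda>v. avg (PiE_dflt I d B) (\<lambda>g. F (g(i:=v))))"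
proof -
  have fin: "finite (PiE_dflt I d B)" using assms by auto
  have "avg (PiE_dflt (insert i I) d B) F = avg (B i \<times> PiE_dflt I d B) (\<lambda>x. F ((\<lambda>(v,g). g(i:=v)) x))"
    by (rule avg_reindex[OF PiE_dflt_insert_bij[OF assms(2)]])
  also have "\<dots> = avg (B i) (\<lambda>v. avg (PiE_dflt I d B) (\<lambda>g. F (g(i:=v))))"
    unfolding avg_def
    by (simp add: card_cartesian_product sum.cartesian_product sum_divide_distrib[symmetric]
          divide_divide_eq_left mult.commute case_prod_beta)
  finally show ?thesis .
qed

lemma avg_prod_PiE:
  assumes "finite C" "\<And>x. x \<in> C \<Longrightarrow> finite (B x)"
  shows "avg (PiE_dflt C d B) (\<lambda>s. \<Prod>c\<in>C. g c (s c)) = (\<Prod>c\<in>C. avg (B c) (g c))"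
  using assms
proof (induction C rule: finite_induct)
  case empty
  have "PiE_dflt {} d B = {\<lambda>_. d}" by (auto simp: PiE_dflt_def)
  then show ?case by (simp add: avg_def)
next
  case (insert i C)
  have "avg (PiE_dflt (insert i C) d B) (\<lambda>s. \<Prod>c\<in>insert i C. g c (s c))
      = avg (B i) (\<lambda>v. avg (PiE_dflt C d B) (\<lambda>s. \<Prod>c\<in>insert i C. g c ((s(i:=v)) c)))"
    by (rule avg_PiE_insert) (use insert in auto)
  also have "\<dots> = avg (B i) (\<lambda>v. avg (PiE_dflt C d B) (\<lambda>s. g i v * (\<Prod>c\<in>C. g c (s c))))"
  proof (intro avg_cong)
    fix v s assume "s \<in> PiE_dflt C d B"
    have "(\<Prod>c\<in>C. g c ((s(i:=v)) c)) = (\<Prod>c\<in>C. g c (s c))"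
      using insert by (intro prod.cong) auto
    then show "(\<Prod>c\<in>insert i C. g c ((s(i:=v)) c)) = g i v * (\<Prod>c\<in>C. g c (s c))"
      using insert by simp
  qed
  also have "\<dots> = avg (B i) (\<lambda>v. g i v * (\<Prod>c\<in>C. avg (B c) (g c)))"
    using insert by (simp add: avg_cmult)
  also have "\<dots> = (\<Prod>c\<in>insert i C. avg (B c) (g c))"
    using insert by (simp add: avg_def sum_distrib_right[symmetric] mult.commute)
  finally show ?case .
qed

lemma exp_tangent: "exp (c::real) * (1 + (x - c)) \<le> exp x"
proof -
  have "1 + (x - c) \<le> exp (x - c)" by (rule exp_ge_add_one_self)
  then have "exp c * (1 + (x - c)) \<le> exp c * exp (x - c)" by (intro mult_left_mono) auto
  then show ?thesis by (simp add: exp_diff)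
qed

lemma avg_jensen_exp:
  assumes "finite A" "A \<noteq> {}"
  shows "exp (avg A g) \<le> avg A (\<lambda>x. exp (g x))"
proof -
  have "avg A (\<lambda>x. exp (avg A g) * (1 + (g x - avg A g))) \<le> avg A (\<lambda>x. exp (g x))"
    by (intro avg_mono exp_tangent)
  also have "avg A (\<lambda>x. exp (avg A g) * (1 + (g x - avg A g))) = exp (avg A g)"
    using assms by (simp add: avg_cmult avg_add avg_diff avg_const)
  finally show ?thesis by simp
qed


lemma hoeffding_avg:
  fixes g :: "'a \<Rightarrow> real"
  assumes A: "finite A" "A \<noteq> {}" and ab: "\<And>x. x \<in> A \<Longrightarrow> a \<le> g x \<and> g x \<le> b" and l: "l > 0"
  shows "avg A (\<lambda>x. exp (l * (g x - avg A g))) \<le> exp (l\<^sup>2 * (b - a)\<^sup>2 / 8)"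
proof -
  let ?M = "measure_pmf (pmf_of_set A)"
  interpret interval_bounded_random_variable ?M g a b
    by unfold_locales (use A ab in \<open>auto simp: AE_measure_pmf_iff\<close>)
  have E: "integral\<^sup>L ?M h = avg A h" for h
    using A by (simp add: integral_pmf_of_set avg_def)
  have fin: "finite (set_pmf (pmf_of_set A))" using A by simp
  have "ennreal (avg A (\<lambda>x. exp (l * (g x - avg A g))))
      = (\<integral>\<^sup>+ x. ennreal (exp (l * (g x - integral\<^sup>L ?M g))) \<partial>?M)"
    by (subst nn_integral_eq_integral) (auto simp: E integrable_measure_pmf_finite[OF fin])
  also have "\<dots> \<le> ennreal (exp (l\<^sup>2 * (b - a)\<^sup>2 / 8))"
    by (rule Hoeffdings_lemma_nn_integral[OF l])
  finally show ?thesis by (simp add: ennreal_le_iff)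
qed

lemma avg_abs: "\<bar>avg A g\<bar> \<le> avg A (\<lambda>x. \<bar>g x\<bar>)"
  unfolding avg_def by (simp add: abs_divide divide_right_mono sum_abs)

lemma mcdiarmid:
  fixes \<Psi> :: "('c \<Rightarrow> 'a) \<Rightarrow> real"
  assumes C: "finite C" and B: "\<And>x. x \<in> C \<Longrightarrow> finite (B x) \<and> B x \<noteq> {}" and l: "l > 0"
    and bd: "\<And>y x v. y \<in> PiE_dflt C d B \<Longrightarrow> x \<in> C \<Longrightarrow> v \<in> B x \<Longrightarrow> \<bar>\<Psi> (y(x:=v)) - \<Psi> y\<bar> \<le> c x"
  shows "avg (PiE_dflt C d B) (\<lambda>y. exp (l * (\<Psi> y - avg (PiE_dflt C d B) \<Psi>)))
           \<le> exp (l\<^sup>2 * (\<Sum>x\<in>C. (c x)\<^sup>2) / 8)"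
  using C B bd
proof (induction C arbitrary: \<Psi> rule: finite_induct)
  case empty
  have "PiE_dflt {} d B = {\<lambda>_. d}" by (auto simp: PiE_dflt_def)
  then show ?case by (simp add: avg_def)
next
  case (insert i C)
  define P where "P = PiE_dflt (insert i C) d B"
  define P' where "P' = PiE_dflt C d B"
  define \<Psi>1 where "\<Psi>1 = (\<lambda>g. avg (B i) (\<lambda>v. \<Psi> (g(i:=v))))"
  have Bi: "finite (B i)" "B i \<noteq> {}" using insert by auto
  have finB: "\<And>x. x \<in> insert i C \<Longrightarrow> finite (B x)" using insert by auto
  have finP': "finite P'" unfolding P'_def using insert by auto
  have P'ne: "P' \<noteq> {}" unfolding P'_def using insert by auto
  have inP: "g(i:=v) \<in> P" if "g \<in> P'" "v \<in> B i" for g v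
    using that insert.hyps unfolding P_def P'_def PiE_dflt_def by auto
  have mu: "avg P \<Psi> = avg P' \<Psi>1"
    unfolding P_def \<Psi>1_def P'_def
    by (subst avg_PiE_insert[OF insert.hyps(1,2) finB]) (simp_all, rule avg_swap)
  have bd1: "\<bar>\<Psi>1 (y(x:=w)) - \<Psi>1 y\<bar> \<le> c x" if "y \<in> P'" "x \<in> C" "w \<in> B x" for y x w
  proof -
    have "\<Psi>1 (y(x:=w)) - \<Psi>1 y = avg (B i) (\<lambda>v. \<Psi> ((y(i:=v))(x:=w)) - \<Psi> (y(i:=v)))"
      unfolding \<Psi>1_def avg_diff[symmetric] using that insert.hyps
      by (intro avg_cong) (metis fun_upd_twist)
    also have "\<bar>\<dots>\<bar> \<le> avg (B i) (\<lambda>v. \<bar>\<Psi> ((y(i:=v))(x:=w)) - \<Psi> (y(i:=v))\<bar>)" by (rule avg_abs)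
    also have "\<dots> \<le> avg (B i) (\<lambda>v. c x)"
    proof (intro avg_mono)
      fix v assume v: "v \<in> B i"
      show "\<bar>\<Psi> ((y(i:=v))(x:=w)) - \<Psi> (y(i:=v))\<bar> \<le> c x"
        using insert.prems(2)[of "y(i:=v)" x w] that inP[OF that(1) v] unfolding P_def by blast
    qed
    also have "\<dots> = c x" using Bi by (simp add: avg_const)
    finally show ?thesis .
  qed
  have IH: "avg P' (\<lambda>y. exp (l * (\<Psi>1 y - avg P' \<Psi>1))) \<le> exp (l\<^sup>2 * (\<Sum>x\<in>C. (c x)\<^sup>2) / 8)"
    unfolding P'_def
    apply (rule insert.IH)
    using insert.prems(1) apply blast
    using bd1 unfolding P'_def by blast
  have hoef: "avg (B i) (\<lambda>v. exp (l * (\<Psi> (g(i:=v)) - \<Psi>1 g))) \<le> exp (l\<^sup>2 * (c i)\<^sup>2 / 8)"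
    if g: "g \<in> P'" for g
  proof -
    define vals where "vals = (\<lambda>v. \<Psi> (g(i:=v))) ` B i"
    define a where "a = Min vals"
    have "a \<in> vals" unfolding a_def vals_def using Bi by (intro Min_in) auto
    then obtain v0 where v0: "v0 \<in> B i" "a = \<Psi> (g(i:=v0))" unfolding vals_def by auto
    have "a \<le> \<Psi> (g(i:=v)) \<and> \<Psi> (g(i:=v)) \<le> a + c i" if "v \<in> B i" for v
    proof
      show "a \<le> \<Psi> (g(i:=v))" unfolding a_def vals_def using Bi that by (intro Min_le) auto
      have "\<bar>\<Psi> ((g(i:=v0))(i:=v)) - \<Psi> (g(i:=v0))\<bar> \<le> c i"
        using insert.prems(2)[of "g(i:=v0)" i v] inP[OF g v0(1)] that unfolding P_def by blast
      then show "\<Psi> (g(i:=v)) \<le> a + c i" using v0 by simp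
    qed
    from hoeffding_avg[OF Bi this l] show ?thesis unfolding \<Psi>1_def by simp
  qed
  have "avg P (\<lambda>y. exp (l * (\<Psi> y - avg P \<Psi>)))
      = avg P' (\<lambda>g. avg (B i) (\<lambda>v. exp (l * (\<Psi> (g(i:=v)) - avg P' \<Psi>1))))"
    unfolding P_def P'_def mu[unfolded P_def P'_def]
    by (subst avg_PiE_insert[OF insert.hyps(1,2) finB]) (simp_all, rule avg_swap)
  also have "\<dots> = avg P' (\<lambda>g. exp (l * (\<Psi>1 g - avg P' \<Psi>1)) *
                        avg (B i) (\<lambda>v. exp (l * (\<Psi> (g(i:=v)) - \<Psi>1 g))))"
    by (intro avg_cong) (simp add: avg_cmult[symmetric] exp_add[symmetric] algebra_simps)
  also have "\<dots> \<le> avg P' (\<lambda>g. exp (l * (\<Psi>1 g - avg P' \<Psi>1)) * exp (l\<^sup>2 * (c i)\<^sup>2 / 8))"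
    by (intro avg_mono mult_left_mono hoef) auto
  also have "\<dots> = exp (l\<^sup>2 * (c i)\<^sup>2 / 8) * avg P' (\<lambda>g. exp (l * (\<Psi>1 g - avg P' \<Psi>1)))"
    unfolding avg_def by (simp add: sum_distrib_right[symmetric] mult.commute)
  also have "\<dots> \<le> exp (l\<^sup>2 * (c i)\<^sup>2 / 8) * exp (l\<^sup>2 * (\<Sum>x\<in>C. (c x)\<^sup>2) / 8)"
    by (intro mult_left_mono IH) auto
  also have "\<dots> = exp (l\<^sup>2 * (\<Sum>x\<in>insert i C. (c x)\<^sup>2) / 8)"
    using insert.hyps by (simp add: exp_add[symmetric] algebra_simps add_divide_distrib)
  finally show ?case unfolding P_def .
qed


definition Zset :: "nat \<Rightarrow> nat \<Rightarrow> nat set set" where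
  "Zset n m = {Z. Z \<subseteq> {..<n} \<and> card Z = m}"
definition Yset :: "nat \<Rightarrow> nat \<Rightarrow> (nat \<Rightarrow> nat) set" where
  "Yset n m = PiE_dflt {..<m} 0 (\<lambda>_. {..<n})"
definition cnt :: "nat \<Rightarrow> (nat \<Rightarrow> nat) \<Rightarrow> nat \<Rightarrow> real" where
  "cnt m Y a = real (card {l\<in>{..<m}. Y l = a})"
definition indv :: "nat set \<Rightarrow> nat \<Rightarrow> real" where
  "indv Z a = (if a \<in> Z then 1 else 0)"
definition wt :: "nat \<Rightarrow> nat \<Rightarrow> (nat \<Rightarrow> nat) \<Rightarrow> nat set \<Rightarrow> real" where
  "wt n m Y Z = (if Y ` {..<m} \<subseteq> Z then 1 / real ((n - card (Y ` {..<m})) choose (m - card (Y ` {..<m}))) else 0)"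
definition pY :: "nat \<Rightarrow> (nat \<Rightarrow> nat) \<Rightarrow> (nat \<Rightarrow> nat) \<Rightarrow> (nat \<Rightarrow> nat)" where
  "pY m \<sigma> Y = (\<lambda>l. if l < m then \<sigma> (Y l) else 0)"

lemma finite_Zset: "finite (Zset n m)"
  unfolding Zset_def by (rule finite_subset[of _ "Pow {..<n}"]) auto
lemma card_Zset: "card (Zset n m) = n choose m"
  unfolding Zset_def using n_subsets[of "{..<n}" m] by simp
lemma Zset_ne: "m \<le> n \<Longrightarrow> Zset n m \<noteq> {}"
  using card_Zset[of n m] by (auto simp: finite_Zset)
lemma finite_Yset: "finite (Yset n m)"
  unfolding Yset_def by auto
lemma card_Yset: "card (Yset n m) = n ^ m"
  unfolding Yset_def by (subst card_PiE_dflt) auto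
lemma Yset_ne: "0 < n \<Longrightarrow> Yset n m \<noteq> {}"
  unfolding Yset_def by (auto)

lemma Yset_img: "Y \<in> Yset n m \<Longrightarrow> Y ` {..<m} \<subseteq> {..<n}"
  unfolding Yset_def PiE_dflt_def by auto

lemma wt_nonneg: "0 \<le> wt n m Y Z"
  unfolding wt_def by auto

lemma card_supsets:
  assumes R: "R \<subseteq> {..<n}" and "card R \<le> m"
  shows "card {Z \<in> Zset n m. R \<subseteq> Z} = (n - card R) choose (m - card R)"
proof -
  have finR: "finite R" using R finite_subset by blast
  have "bij_betw (\<lambda>Z. Z - R) {Z \<in> Zset n m. R \<subseteq> Z} {W. W \<subseteq> {..<n} - R \<and> card W = m - card R}"
  proof (rule bij_betw_byWitness[where f' = "\<lambda>W. W \<union> R"])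
    show "\<forall>Z\<in>{Z \<in> Zset n m. R \<subseteq> Z}. Z - R \<union> R = Z" by auto
    show "\<forall>W\<in>{W. W \<subseteq> {..<n} - R \<and> card W = m - card R}. W \<union> R - R = W" by auto
    show "(\<lambda>Z. Z - R) ` {Z \<in> Zset n m. R \<subseteq> Z} \<subseteq> {W. W \<subseteq> {..<n} - R \<and> card W = m - card R}"
    proof clarify
      fix Z assume "Z \<in> Zset n m" "R \<subseteq> Z"
      moreover then have "finite Z" unfolding Zset_def using finite_subset by blast
      ultimately show "Z - R \<subseteq> {..<n} - R \<and> card (Z - R) = m - card R"
        unfolding Zset_def by (auto simp: card_Diff_subset finR)
    qed
    show "(\<lambda>W. W \<union> R) ` {W. W \<subseteq> {..<n} - R \<and> card W = m - card R} \<subseteq> {Z \<in> Zset n m. R \<subseteq> Z}"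
    proof clarify
      fix W assume W: "W \<subseteq> {..<n} - R" "card W = m - card R"
      then have "finite W" using finite_subset by blast
      moreover have "W \<inter> R = {}" using W by auto
      ultimately have "card (W \<union> R) = m" using W assms finR by (simp add: card_Un_disjoint)
      then show "W \<union> R \<in> Zset n m \<and> R \<subseteq> W \<union> R" using W R unfolding Zset_def by auto
    qed
  qed
  then have "card {Z \<in> Zset n m. R \<subseteq> Z} = card {W. W \<subseteq> {..<n} - R \<and> card W = m - card R}"
    by (rule bij_betw_same_card)
  also have "\<dots> = card ({..<n} - R) choose (m - card R)" by (rule n_subsets) simp
  also have "card ({..<n} - R) = n - card R" using R finR by (simp add: card_Diff_subset)
  finally show ?thesis .
qed

lemma card_img_le: "card (Y ` {..<m}) \<le> m"
  using card_image_le[of "{..<m}" Y] by simp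

lemma wt_sum_Z:
  assumes Y: "Y \<in> Yset n m" and mn: "m \<le> n"
  shows "(\<Sum>Z\<in>Zset n m. wt n m Y Z) = 1"
proof -
  define R where "R = Y ` {..<m}"
  have R: "R \<subseteq> {..<n}" "card R \<le> m" using Yset_img[OF Y] card_img_le unfolding R_def by auto
  have "(\<Sum>Z\<in>Zset n m. wt n m Y Z) = (\<Sum>Z\<in>{Z \<in> Zset n m. R \<subseteq> Z}. 1 / real ((n - card R) choose (m - card R)))"
    unfolding wt_def R_def[symmetric] by (simp add: sum.inter_filter[symmetric] finite_Zset)
  also have "\<dots> = 1"
    using card_supsets[OF R] R mn by (simp add: zero_less_binomial_iff)
  finally show ?thesis .
qed

lemma pY_img: "(pY m \<sigma> Y) ` {..<m} = \<sigma> ` (Y ` {..<m})"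
  unfolding pY_def image_image by (intro image_cong) auto

lemma wt_perm:
  assumes \<sigma>: "bij_betw \<sigma> {..<n} {..<n}" and Y: "Y \<in> Yset n m" and Z: "Z \<subseteq> {..<n}"
  shows "wt n m (pY m \<sigma> Y) (\<sigma> ` Z) = wt n m Y Z"
proof -
  have inj: "inj_on \<sigma> {..<n}" using \<sigma> bij_betw_def by blast
  have R: "Y ` {..<m} \<subseteq> {..<n}" using Yset_img[OF Y] .
  have c: "card (\<sigma> ` (Y ` {..<m})) = card (Y ` {..<m})"
    by (rule card_image[OF inj_on_subset[OF inj R]])
  have s: "\<sigma> ` (Y ` {..<m}) \<subseteq> \<sigma> ` Z \<longleftrightarrow> Y ` {..<m} \<subseteq> Z"
  proof
    assume "\<sigma> ` (Y ` {..<m}) \<subseteq> \<sigma> ` Z"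
    then show "Y ` {..<m} \<subseteq> Z" using inj_on_image_mem_iff[OF inj _ Z] R by blast
  qed auto
  show ?thesis unfolding wt_def pY_img c s ..
qed

lemma pY_Yset:
  assumes \<sigma>: "bij_betw \<sigma> {..<n} {..<n}" and Y: "Y \<in> Yset n m"
  shows "pY m \<sigma> Y \<in> Yset n m"
proof -
  have "\<sigma> (Y l) < n" if "l < m" for l
    using bij_betw_apply[OF \<sigma>, of "Y l"] Y that unfolding Yset_def PiE_dflt_def by auto
  then show ?thesis unfolding Yset_def PiE_dflt_def pY_def by auto
qed

lemma pY_bij:
  assumes \<sigma>: "bij_betw \<sigma> {..<n} {..<n}"
  shows "bij_betw (pY m \<sigma>) (Yset n m) (Yset n m)"
proof (rule bij_betw_byWitness[where f' = "pY m (inv_into {..<n} \<sigma>)"])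
  have \<sigma>': "bij_betw (inv_into {..<n} \<sigma>) {..<n} {..<n}" using \<sigma> by (rule bij_betw_inv_into)
  show "\<forall>a\<in>Yset n m. pY m (inv_into {..<n} \<sigma>) (pY m \<sigma> a) = a"
  proof
    fix Y assume Y: "Y \<in> Yset n m"
    show "pY m (inv_into {..<n} \<sigma>) (pY m \<sigma> Y) = Y"
    proof
      fix l show "pY m (inv_into {..<n} \<sigma>) (pY m \<sigma> Y) l = Y l"
        using Y \<sigma> unfolding pY_def Yset_def PiE_dflt_def
        by (auto simp: bij_betw_def inv_into_f_f)
    qed
  qed
  show "\<forall>a\<in>Yset n m. pY m \<sigma> (pY m (inv_into {..<n} \<sigma>) a) = a"
  proof
    fix Y assume Y: "Y \<in> Yset n m"
    show "pY m \<sigma> (pY m (inv_into {..<n} \<sigma>) Y) = Y"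
    proof
      fix l show "pY m \<sigma> (pY m (inv_into {..<n} \<sigma>) Y) l = Y l"
        using Y \<sigma> unfolding pY_def Yset_def PiE_dflt_def
        by (auto simp: bij_betw_def f_inv_into_f)
    qed
  qed
  show "pY m \<sigma> ` Yset n m \<subseteq> Yset n m" using pY_Yset[OF \<sigma>] by blast
  show "pY m (inv_into {..<n} \<sigma>) ` Yset n m \<subseteq> Yset n m" using pY_Yset[OF \<sigma>'] by blast
qed

lemma exists_perm:
  assumes Z: "Z \<in> Zset n m" and Z': "Z' \<in> Zset n m"
  shows "\<exists>\<sigma>. bij_betw \<sigma> {..<n} {..<n} \<and> \<sigma> ` Z = Z'"
proof -
  have fZ: "finite Z" "finite Z'" "Z \<subseteq> {..<n}" "Z' \<subseteq> {..<n}" "card Z = card Z'"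
    using Z Z' unfolding Zset_def by (auto intro: finite_subset)
  obtain g where g: "bij_betw g Z Z'" using fZ finite_same_card_bij[of Z Z'] by blast
  have "card ({..<n} - Z) = card ({..<n} - Z')" using fZ by (simp add: card_Diff_subset)
  then obtain h where h: "bij_betw h ({..<n} - Z) ({..<n} - Z')"
    using finite_same_card_bij[of "{..<n} - Z" "{..<n} - Z'"] by auto
  define \<sigma> where "\<sigma> = (\<lambda>a. if a \<in> Z then g a else h a)"
  have "bij_betw \<sigma> Z Z'" using g unfolding \<sigma>_def by (rule bij_betw_cong[THEN iffD1, rotated]) auto
  moreover have "bij_betw \<sigma> ({..<n} - Z) ({..<n} - Z')" using h unfolding \<sigma>_def
    by (rule bij_betw_cong[THEN iffD1, rotated]) auto
  ultimately have "bij_betw \<sigma> (Z \<union> ({..<n} - Z)) (Z' \<union> ({..<n} - Z'))"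
    by (rule bij_betw_combine) auto
  moreover have "Z \<union> ({..<n} - Z) = {..<n}" "Z' \<union> ({..<n} - Z') = {..<n}" using fZ by auto
  moreover have "\<sigma> ` Z = Z'" using \<open>bij_betw \<sigma> Z Z'\<close> by (simp add: bij_betw_def)
  ultimately show ?thesis by auto
qed

definition Ssum :: "nat \<Rightarrow> nat \<Rightarrow> nat set \<Rightarrow> real" where
  "Ssum n m Z = (\<Sum>Y\<in>Yset n m. wt n m Y Z)"

lemma Ssum_perm:
  assumes \<sigma>: "bij_betw \<sigma> {..<n} {..<n}" and Z: "Z \<subseteq> {..<n}"
  shows "Ssum n m (\<sigma> ` Z) = Ssum n m Z"
proof -
  have "Ssum n m (\<sigma> ` Z) = (\<Sum>Y\<in>Yset n m. wt n m (pY m \<sigma> Y) (\<sigma> ` Z))"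
    unfolding Ssum_def by (rule sum.reindex_bij_betw[OF pY_bij[OF \<sigma>], symmetric])
  also have "\<dots> = Ssum n m Z" unfolding Ssum_def by (intro sum.cong refl wt_perm[OF \<sigma> _ Z])
  finally show ?thesis .
qed

lemma Ssum_const:
  assumes "Z \<in> Zset n m" "Z' \<in> Zset n m"
  shows "Ssum n m Z = Ssum n m Z'"
proof -
  obtain \<sigma> where "bij_betw \<sigma> {..<n} {..<n}" "\<sigma> ` Z = Z'" using exists_perm[OF assms] by blast
  then show ?thesis using Ssum_perm[of \<sigma> n Z m] assms by (auto simp: Zset_def)
qed

lemma Ssum_val:
  assumes Z: "Z \<in> Zset n m" and mn: "m \<le> n"
  shows "Ssum n m Z * real (n choose m) = real (n ^ m)"
proof -
  have "real (n ^ m) = (\<Sum>Y\<in>Yset n m. \<Sum>Z\<in>Zset n m. wt n m Y Z)"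
    using wt_sum_Z[OF _ mn] by (simp add: card_Yset[symmetric])
  also have "\<dots> = (\<Sum>Z'\<in>Zset n m. Ssum n m Z')" unfolding Ssum_def by (rule sum.swap)
  also have "\<dots> = (\<Sum>Z'\<in>Zset n m. Ssum n m Z)" by (intro sum.cong refl Ssum_const[OF _ Z])
  also have "\<dots> = Ssum n m Z * real (n choose m)" by (simp add: card_Zset)
  finally show ?thesis by simp
qed


definition tr :: "nat \<Rightarrow> nat \<Rightarrow> nat \<Rightarrow> nat" where
  "tr a b x = (if x = a then b else if x = b then a else x)"

lemma tr_bij: assumes "a < n" "b < n" shows "bij_betw (tr a b) {..<n} {..<n}"
  by (rule bij_betw_byWitness[where f' = "tr a b"]) (use assms in \<open>auto simp: tr_def\<close>)

lemma tr_img: assumes "a \<in> Z" "b \<in> Z" shows "tr a b ` Z = Z"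
proof
  show "tr a b ` Z \<subseteq> Z" using assms by (auto simp: tr_def)
  show "Z \<subseteq> tr a b ` Z"
  proof
    fix x assume "x \<in> Z"
    then have "tr a b (tr a b x) = x" "tr a b x \<in> Z" using assms by (auto simp: tr_def)
    then show "x \<in> tr a b ` Z" by (metis imageI)
  qed
qed

lemma cnt_perm:
  assumes \<sigma>: "bij_betw \<sigma> {..<n} {..<n}" and Y: "Y \<in> Yset n m" and a: "a < n"
  shows "cnt m (pY m \<sigma> Y) (\<sigma> a) = cnt m Y a"
proof -
  have inj: "inj_on \<sigma> {..<n}" using \<sigma> bij_betw_def by blast
  have "{l\<in>{..<m}. pY m \<sigma> Y l = \<sigma> a} = {l\<in>{..<m}. Y l = a}"
  proof (intro Collect_cong conj_cong refl)
    fix l assume "l \<in> {..<m}"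
    then have "Y l < n" using Yset_img[OF Y] by auto
    then show "(pY m \<sigma> Y l = \<sigma> a) = (Y l = a)"
      using \<open>l \<in> {..<m}\<close> inj a unfolding pY_def inj_on_def by auto
  qed
  then show ?thesis unfolding cnt_def by simp
qed

lemma cnt_sum:
  assumes "Y ` {..<m} \<subseteq> Z" "finite Z"
  shows "(\<Sum>a\<in>Z. cnt m Y a) = real m"
proof -
  have "(\<Sum>a\<in>Z. card {l\<in>{..<m}. Y l = a}) = card (\<Union>a\<in>Z. {l\<in>{..<m}. Y l = a})"
    by (rule card_UN_disjoint[symmetric]) (use assms in auto)
  also have "(\<Union>a\<in>Z. {l\<in>{..<m}. Y l = a}) = {..<m}" using assms by auto
  finally show ?thesis unfolding cnt_def by (simp flip: of_nat_sum)
qed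

lemma cnt_out: "Y ` {..<m} \<subseteq> Z \<Longrightarrow> a \<notin> Z \<Longrightarrow> cnt m Y a = 0"
  unfolding cnt_def by auto

definition Tsum :: "nat \<Rightarrow> nat \<Rightarrow> nat set \<Rightarrow> nat \<Rightarrow> real" where
  "Tsum n m Z a = (\<Sum>Y\<in>Yset n m. wt n m Y Z * cnt m Y a)"

lemma Tsum_swap:
  assumes Z: "Z \<in> Zset n m" and ab: "a \<in> Z" "b \<in> Z"
  shows "Tsum n m Z b = Tsum n m Z a"
proof -
  have Zn: "Z \<subseteq> {..<n}" using Z unfolding Zset_def by auto
  have a: "a < n" and b: "b < n" using ab Zn by auto
  have \<tau>: "bij_betw (tr a b) {..<n} {..<n}" by (rule tr_bij[OF a b])
  have "Tsum n m Z b = (\<Sum>Y\<in>Yset n m. wt n m (pY m (tr a b) Y) Z * cnt m (pY m (tr a b) Y) b)"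
    unfolding Tsum_def by (rule sum.reindex_bij_betw[OF pY_bij[OF \<tau>], symmetric])
  also have "\<dots> = Tsum n m Z a"
    unfolding Tsum_def
  proof (intro sum.cong refl)
    fix Y assume Y: "Y \<in> Yset n m"
    have "wt n m (pY m (tr a b) Y) Z = wt n m (pY m (tr a b) Y) (tr a b ` Z)" using tr_img[OF ab] by simp
    also have "\<dots> = wt n m Y Z" by (rule wt_perm[OF \<tau> Y Zn])
    finally have 1: "wt n m (pY m (tr a b) Y) Z = wt n m Y Z" .
    have "cnt m (pY m (tr a b) Y) b = cnt m (pY m (tr a b) Y) (tr a b a)" by (simp add: tr_def)
    also have "\<dots> = cnt m Y a" by (rule cnt_perm[OF \<tau> Y a])
    finally show "wt n m (pY m (tr a b) Y) Z * cnt m (pY m (tr a b) Y) b = wt n m Y Z * cnt m Y a"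
      using 1 by simp
  qed
  finally show ?thesis .
qed

lemma Tsum_val:
  assumes Z: "Z \<in> Zset n m" and m: "1 \<le> m"
  shows "Tsum n m Z a = Ssum n m Z * indv Z a"
proof (cases "a \<in> Z")
  case True
  have finZ: "finite Z" using Z unfolding Zset_def by (auto intro: finite_subset)
  have cZ: "card Z = m" using Z unfolding Zset_def by auto
  have "(\<Sum>a'\<in>Z. Tsum n m Z a') = (\<Sum>Y\<in>Yset n m. wt n m Y Z * (\<Sum>a'\<in>Z. cnt m Y a'))"
    unfolding Tsum_def by (simp add: sum_distrib_left sum.swap[of _ Z])
  also have "\<dots> = (\<Sum>Y\<in>Yset n m. wt n m Y Z * real m)"
  proof (intro sum.cong refl)
    fix Y show "wt n m Y Z * (\<Sum>a'\<in>Z. cnt m Y a') = wt n m Y Z * real m"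
      by (cases "Y ` {..<m} \<subseteq> Z") (auto simp: wt_def cnt_sum finZ)
  qed
  also have "\<dots> = Ssum n m Z * real m" unfolding Ssum_def by (simp add: sum_distrib_right)
  finally have 1: "(\<Sum>a'\<in>Z. Tsum n m Z a') = Ssum n m Z * real m" .
  have "(\<Sum>a'\<in>Z. Tsum n m Z a') = (\<Sum>a'\<in>Z. Tsum n m Z a)"
    by (intro sum.cong refl Tsum_swap[OF Z True])
  also have "\<dots> = real m * Tsum n m Z a" using cZ by simp
  finally show ?thesis using 1 m True by (simp add: indv_def)
next
  case False
  have "Tsum n m Z a = 0" unfolding Tsum_def
    by (intro sum.neutral) (auto simp: wt_def cnt_out False)
  then show ?thesis using False by (simp add: indv_def)
qed

definition convexish1 :: "((nat \<Rightarrow> real) \<Rightarrow> real) \<Rightarrow> bool" where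
  "convexish1 G \<longleftrightarrow> (\<forall>(A::(nat\<Rightarrow>nat) set) \<mu> u. finite A \<longrightarrow> A \<noteq> {} \<longrightarrow> (\<forall>y\<in>A. 0 \<le> \<mu> y) \<longrightarrow>
      sum \<mu> A = 1 \<longrightarrow> G (\<lambda>a. \<Sum>y\<in>A. \<mu> y * u y a) \<le> (\<Sum>y\<in>A. \<mu> y * G (u y)))"

lemma dominate1:
  assumes G: "convexish1 G" and m: "1 \<le> m" "m \<le> n"
  shows "avg (Zset n m) (\<lambda>Z. G (indv Z)) \<le> avg (Yset n m) (\<lambda>Y. G (cnt m Y))"
proof -
  define \<kappa> where "\<kappa> = real (n ^ m) / real (n choose m)"
  have Cpos: "real (n choose m) > 0" using m by (simp add: zero_less_binomial_iff)
  have npos: "n > 0" using m by auto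
  have kappa: "Ssum n m Z = \<kappa>" if "Z \<in> Zset n m" for Z
    using Ssum_val[OF that m(2)] Cpos unfolding \<kappa>_def by (simp add: field_simps)
  have kpos: "\<kappa> > 0" unfolding \<kappa>_def using Cpos npos by simp
  have YS: "finite (Yset n m)" "Yset n m \<noteq> {}" using finite_Yset Yset_ne[OF npos] by auto
  have step: "\<kappa> * G (indv Z) \<le> (\<Sum>Y\<in>Yset n m. wt n m Y Z * G (cnt m Y))" if Z: "Z \<in> Zset n m" for Z
  proof -
    define \<mu> where "\<mu> = (\<lambda>Y. wt n m Y Z / \<kappa>)"
    have s1: "sum \<mu> (Yset n m) = 1"
      unfolding \<mu>_def using kappa[OF Z] kpos by (simp add: sum_divide_distrib[symmetric] Ssum_def)
    have "(\<lambda>a. \<Sum>Y\<in>Yset n m. \<mu> Y * cnt m Y a) = indv Z"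
    proof
      fix a
      have "(\<Sum>Y\<in>Yset n m. \<mu> Y * cnt m Y a) = Tsum n m Z a / \<kappa>"
        unfolding \<mu>_def Tsum_def by (simp add: sum_divide_distrib)
      also have "\<dots> = indv Z a" using Tsum_val[OF Z m(1)] kappa[OF Z] kpos by simp
      finally show "(\<Sum>Y\<in>Yset n m. \<mu> Y * cnt m Y a) = indv Z a" .
    qed
    moreover have "\<forall>y\<in>Yset n m. 0 \<le> \<mu> y" unfolding \<mu>_def using kpos wt_nonneg by simp
    ultimately have "G (indv Z) \<le> (\<Sum>Y\<in>Yset n m. \<mu> Y * G (cnt m Y))"
      using G[unfolded convexish1_def, rule_format, of "Yset n m" \<mu> "\<lambda>Y. cnt m Y"] YS s1
      by simp
    then have "\<kappa> * G (indv Z) \<le> \<kappa> * (\<Sum>Y\<in>Yset n m. \<mu> Y * G (cnt m Y))"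
      using kpos by simp
    also have "\<dots> = (\<Sum>Y\<in>Yset n m. wt n m Y Z * G (cnt m Y))"
      unfolding \<mu>_def using kpos by (simp add: sum_distrib_left)
    finally show ?thesis .
  qed
  have "(\<Sum>Y\<in>Yset n m. G (cnt m Y)) = (\<Sum>Y\<in>Yset n m. (\<Sum>Z\<in>Zset n m. wt n m Y Z) * G (cnt m Y))"
    using wt_sum_Z[OF _ m(2)] by simp
  also have "\<dots> = (\<Sum>Z\<in>Zset n m. \<Sum>Y\<in>Yset n m. wt n m Y Z * G (cnt m Y))"
    by (simp add: sum_distrib_right sum.swap[of _ "Yset n m"])
  also have "\<dots> \<ge> (\<Sum>Z\<in>Zset n m. \<kappa> * G (indv Z))" by (intro sum_mono step)
  finally have 1: "\<kappa> * (\<Sum>Z\<in>Zset n m. G (indv Z)) \<le> (\<Sum>Y\<in>Yset n m. G (cnt m Y))"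
    by (simp add: sum_distrib_left)
  have "avg (Zset n m) (\<lambda>Z. G (indv Z)) = \<kappa> * (\<Sum>Z\<in>Zset n m. G (indv Z)) / real (n ^ m)"
    unfolding avg_def \<kappa>_def card_Zset using npos by simp
  also have "\<dots> \<le> (\<Sum>Y\<in>Yset n m. G (cnt m Y)) / real (n ^ m)"
    by (rule divide_right_mono[OF 1]) simp
  also have "\<dots> = avg (Yset n m) (\<lambda>Y. G (cnt m Y))" unfolding avg_def card_Yset ..
  finally show ?thesis .
qed


definition convexish2 :: "((nat \<Rightarrow> nat \<Rightarrow> real) \<Rightarrow> real) \<Rightarrow> bool" where
  "convexish2 G \<longleftrightarrow> (\<forall>(A::(nat\<Rightarrow>nat) set) \<mu> u. finite A \<longrightarrow> A \<noteq> {} \<longrightarrow> (\<forall>y\<in>A. 0 \<le> \<mu> y) \<longrightarrow>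
      sum \<mu> A = 1 \<longrightarrow> G (\<lambda>i a. \<Sum>y\<in>A. \<mu> y * u y i a) \<le> (\<Sum>y\<in>A. \<mu> y * G (u y)))"

lemma convexish_row:
  assumes G: "convexish2 G"
  shows "convexish1 (\<lambda>u. G (M(i:=u)))"
  unfolding convexish1_def
proof (intro allI impI)
  fix A :: "(nat\<Rightarrow>nat) set" and \<mu> :: "(nat\<Rightarrow>nat) \<Rightarrow> real" and u
  assume A: "finite A" "A \<noteq> {}" "\<forall>y\<in>A. 0 \<le> \<mu> y" "sum \<mu> A = 1"
  have "M(i := (\<lambda>a. \<Sum>y\<in>A. \<mu> y * u y a)) = (\<lambda>i' a. \<Sum>y\<in>A. \<mu> y * (M(i := u y)) i' a)"
  proof (intro ext)
    fix i' a show "(M(i := (\<lambda>a. \<Sum>y\<in>A. \<mu> y * u y a))) i' a = (\<Sum>y\<in>A. \<mu> y * (M(i := u y)) i' a)"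
    proof (cases "i' = i")
      case False
      then show ?thesis using A(4) by (simp add: sum_distrib_right[symmetric])
    qed simp
  qed
  then show "G (M(i := (\<lambda>a. \<Sum>y\<in>A. \<mu> y * u y a))) \<le> (\<Sum>y\<in>A. \<mu> y * G (M(i := u y)))"
    using G[unfolded convexish2_def, rule_format, of A \<mu> "\<lambda>y. M(i := u y)"] A by simp
qed

lemma convexish_fix:
  assumes G: "convexish2 G"
  shows "convexish2 (\<lambda>M. G (M(i:=c)))"
  unfolding convexish2_def
proof (intro allI impI)
  fix A :: "(nat\<Rightarrow>nat) set" and \<mu> :: "(nat\<Rightarrow>nat) \<Rightarrow> real" and u
  assume A: "finite A" "A \<noteq> {}" "\<forall>y\<in>A. 0 \<le> \<mu> y" "sum \<mu> A = 1"
  have "(\<lambda>i a. \<Sum>y\<in>A. \<mu> y * u y i a)(i := c) = (\<lambda>i' a. \<Sum>y\<in>A. \<mu> y * ((u y)(i := c)) i' a)"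
  proof (intro ext)
    fix i' a show "((\<lambda>i a. \<Sum>y\<in>A. \<mu> y * u y i a)(i := c)) i' a = (\<Sum>y\<in>A. \<mu> y * ((u y)(i := c)) i' a)"
    proof (cases "i' = i")
      case True
      then show ?thesis using A(4) by (simp add: sum_distrib_right[symmetric])
    qed simp
  qed
  then show "G ((\<lambda>i a. \<Sum>y\<in>A. \<mu> y * u y i a)(i := c)) \<le> (\<Sum>y\<in>A. \<mu> y * G ((u y)(i := c)))"
    using G[unfolded convexish2_def, rule_format, of A \<mu> "\<lambda>y. (u y)(i := c)"] A by simp
qed

definition MZ :: "nat set \<Rightarrow> (nat \<Rightarrow> nat set) \<Rightarrow> nat \<Rightarrow> nat \<Rightarrow> real" where
  "MZ I J = (\<lambda>i a. if i \<in> I then indv (J i) a else 0)"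
definition MY :: "nat \<Rightarrow> nat set \<Rightarrow> (nat \<Rightarrow> nat \<Rightarrow> nat) \<Rightarrow> nat \<Rightarrow> nat \<Rightarrow> real" where
  "MY m I Y = (\<lambda>i a. if i \<in> I then cnt m (Y i) a else 0)"

lemma MZ_insert: "i \<notin> I \<Longrightarrow> MZ (insert i I) (J(i:=Z)) = (MZ I J)(i := indv Z)"
  unfolding MZ_def by (intro ext) auto
lemma MY_insert: "i \<notin> I \<Longrightarrow> MY m (insert i I) (Y(i:=y)) = (MY m I Y)(i := cnt m y)"
  unfolding MY_def by (intro ext) auto

lemma dominate_multi:
  assumes I: "finite I" and G: "convexish2 G" and m: "1 \<le> m" "m \<le> n"
  shows "avg (PiE_dflt I {} (\<lambda>_. Zset n m)) (\<lambda>J. G (MZ I J))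
         \<le> avg (PiE_dflt I (\<lambda>_. 0) (\<lambda>_. Yset n m)) (\<lambda>Y. G (MY m I Y))"
  using I G
proof (induction I arbitrary: G rule: finite_induct)
  case empty
  have e: "PiE_dflt {} {} (\<lambda>_. Zset n m) = {\<lambda>_. {}}" "PiE_dflt {} (\<lambda>_. 0) (\<lambda>_. Yset n m) = {\<lambda>_. \<lambda>_. 0}"
    by (auto simp: PiE_dflt_def)
  have "MZ {} (\<lambda>_. {}) = MY m {} (\<lambda>_ _. 0)" unfolding MZ_def MY_def by simp
  then show ?case unfolding avg_def e by simp
next
  case (insert i I)
  let ?PZ = "PiE_dflt I {} (\<lambda>_. Zset n m)" and ?PY = "PiE_dflt I (\<lambda>_. 0) (\<lambda>_. Yset n m)"
  have "avg (PiE_dflt (insert i I) {} (\<lambda>_. Zset n m)) (\<lambda>J. G (MZ (insert i I) J))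
      = avg (Zset n m) (\<lambda>Z. avg ?PZ (\<lambda>J. G (MZ (insert i I) (J(i:=Z)))))"
    by (rule avg_PiE_insert) (use insert.hyps finite_Zset in auto)
  also have "\<dots> = avg ?PZ (\<lambda>J. avg (Zset n m) (\<lambda>Z. G ((MZ I J)(i := indv Z))))"
    using insert.hyps by (simp add: MZ_insert avg_swap[of "Zset n m"])
  also have "\<dots> \<le> avg ?PZ (\<lambda>J. avg (Yset n m) (\<lambda>y. G ((MZ I J)(i := cnt m y))))"
    by (intro avg_mono dominate1[OF convexish_row[OF insert.prems] m])
  also have "\<dots> = avg (Yset n m) (\<lambda>y. avg ?PZ (\<lambda>J. G ((MZ I J)(i := cnt m y))))"
    by (rule avg_swap)
  also have "\<dots> \<le> avg (Yset n m) (\<lambda>y. avg ?PY (\<lambda>Y. G ((MY m I Y)(i := cnt m y))))"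
    by (intro avg_mono insert.IH[of "\<lambda>M. G (M(i := cnt m _))", simplified] convexish_fix[OF insert.prems])
  also have "\<dots> = avg (PiE_dflt (insert i I) (\<lambda>_. 0) (\<lambda>_. Yset n m)) (\<lambda>Y. G (MY m (insert i I) Y))"
    by (subst avg_PiE_insert) (use insert.hyps finite_Yset in \<open>auto simp: MY_insert\<close>)
  finally show ?case .
qed


definition shat :: "'x set set \<Rightarrow> 'x set \<Rightarrow> bool" where
  "shat F A \<longleftrightarrow> (\<forall>B\<subseteq>A. \<exists>c\<in>F. c \<inter> A = B)"

lemma pajor:
  assumes "finite P" "F \<subseteq> Pow P"
  shows "card F \<le> card {A. A \<subseteq> P \<and> shat F A}"
  using assms
proof (induction P arbitrary: F rule: finite_induct)
  case empty
  then have "F \<subseteq> {{}}" by auto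
  then have "F = {} \<or> F = {{}}" by auto
  then show ?case
  proof
    assume "F = {{}}"
    then have "{A. A \<subseteq> {} \<and> shat F A} = {{}}" by (auto simp: shat_def)
    then show ?thesis using \<open>F = {{}}\<close> by simp
  qed simp
next
  case (insert x P)
  have finF: "finite F" using insert.prems insert.hyps(1) by (meson finite_Pow_iff finite_insert finite_subset)
  define A0 where "A0 = {c \<in> F. x \<notin> c}"
  define B0 where "B0 = {c \<in> F. x \<in> c}"
  define F0 where "F0 = (\<lambda>c. c - {x}) ` F"
  define F1 where "F1 = {c \<in> F. x \<notin> c \<and> insert x c \<in> F}"
  have F0eq: "F0 = A0 \<union> (\<lambda>c. c - {x}) ` B0" unfolding F0_def A0_def B0_def by auto
  have F1eq: "F1 = A0 \<inter> (\<lambda>c. c - {x}) ` B0"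
  proof
    show "F1 \<subseteq> A0 \<inter> (\<lambda>c. c - {x}) ` B0"
    proof
      fix c assume c: "c \<in> F1"
      then have "insert x c \<in> B0" "c = insert x c - {x}" unfolding F1_def B0_def by auto
      then show "c \<in> A0 \<inter> (\<lambda>c. c - {x}) ` B0" using c unfolding F1_def A0_def by blast
    qed
    show "A0 \<inter> (\<lambda>c. c - {x}) ` B0 \<subseteq> F1"
    proof
      fix c assume "c \<in> A0 \<inter> (\<lambda>c. c - {x}) ` B0"
      then obtain b where "c \<in> A0" "b \<in> B0" "c = b - {x}" by auto
      moreover then have "insert x c = b" unfolding B0_def by auto
      ultimately show "c \<in> F1" unfolding F1_def A0_def B0_def by auto
    qed
  qed
  have injB: "inj_on (\<lambda>c. c - {x}) B0" unfolding B0_def by (rule inj_onI) blast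
  have finA0: "finite A0" "finite B0" unfolding A0_def B0_def using finF by auto
  have cardF: "card F = card A0 + card B0"
  proof -
    have "F = A0 \<union> B0" "A0 \<inter> B0 = {}" unfolding A0_def B0_def by auto
    then show ?thesis using finA0 by (simp add: card_Un_disjoint)
  qed
  have "card F0 + card F1 = card A0 + card ((\<lambda>c. c - {x}) ` B0)"
    unfolding F0eq F1eq by (rule card_Un_Int[symmetric]) (use finA0 in auto)
  also have "card ((\<lambda>c. c - {x}) ` B0) = card B0" by (rule card_image[OF injB])
  finally have c01: "card F0 + card F1 = card F" using cardF by simp
  have F0P: "F0 \<subseteq> Pow P" unfolding F0_def using insert.prems by auto
  have F1P: "F1 \<subseteq> Pow P" unfolding F1_def using insert.prems by auto
  have IH0: "card F0 \<le> card {A. A \<subseteq> P \<and> shat F0 A}" by (rule insert.IH[OF F0P])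
  have IH1: "card F1 \<le> card {A. A \<subseteq> P \<and> shat F1 A}" by (rule insert.IH[OF F1P])
  define S0 where "S0 = {A. A \<subseteq> P \<and> shat F0 A}"
  define S1 where "S1 = {A. A \<subseteq> P \<and> shat F1 A}"
  have finS: "finite S0" "finite S1" unfolding S0_def S1_def using insert.hyps(1) by auto
  have sub: "S0 \<union> insert x ` S1 \<subseteq> {A. A \<subseteq> insert x P \<and> shat F A}"
  proof
    fix A assume "A \<in> S0 \<union> insert x ` S1"
    then show "A \<in> {A. A \<subseteq> insert x P \<and> shat F A}"
    proof
      assume A: "A \<in> S0"
      then have xA: "x \<notin> A" unfolding S0_def using insert.hyps(2) by auto
      have "shat F A"
        unfolding shat_def
      proof (intro allI impI)
        fix B assume "B \<subseteq> A"
        then obtain c where "c \<in> F0" "c \<inter> A = B" using A unfolding S0_def shat_def by blast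
        then obtain c' where "c' \<in> F" "(c' - {x}) \<inter> A = B" unfolding F0_def by auto
        moreover have "(c' - {x}) \<inter> A = c' \<inter> A" using xA by auto
        ultimately show "\<exists>c\<in>F. c \<inter> A = B" by auto
      qed
      then show ?thesis using A unfolding S0_def by auto
    next
      assume "A \<in> insert x ` S1"
      then obtain A' where A': "A' \<in> S1" "A = insert x A'" by auto
      then have xA: "x \<notin> A'" "A' \<subseteq> P" unfolding S1_def using insert.hyps(2) by auto
      have "shat F A"
        unfolding shat_def
      proof (intro allI impI)
        fix B assume B: "B \<subseteq> A"
        then have "B - {x} \<subseteq> A'" using A' by auto
        then obtain c where c: "c \<in> F1" "c \<inter> A' = B - {x}" using A' unfolding S1_def shat_def by blast
        have xc: "x \<notin> c" using c unfolding F1_def by auto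
        show "\<exists>c\<in>F. c \<inter> A = B"
        proof (cases "x \<in> B")
          case True
          have "insert x c \<in> F" using c unfolding F1_def by auto
          moreover have "insert x c \<inter> A = B" using c True A' xc B by auto
          ultimately show ?thesis by blast
        next
          case False
          have "c \<in> F" using c unfolding F1_def by auto
          moreover have "c \<inter> A = B" using c False A' xc by auto
          ultimately show ?thesis by blast
        qed
      qed
      then show ?thesis using A' unfolding S1_def by auto
    qed
  qed
  have disj: "S0 \<inter> insert x ` S1 = {}" unfolding S0_def using insert.hyps(2) by auto
  have injS1: "inj_on (insert x) S1" unfolding S1_def using insert.hyps(2)
    by (intro inj_onI) (metis (no_types, lifting) Diff_insert_absorb mem_Collect_eq subset_iff)
  have "card F \<le> card S0 + card S1" using IH0 IH1 c01 unfolding S0_def S1_def by linarith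
  also have "card S1 = card (insert x ` S1)" by (rule card_image[OF injS1, symmetric])
  also have "card S0 + card (insert x ` S1) = card (S0 \<union> insert x ` S1)"
    by (rule card_Un_disjoint[symmetric]) (use finS disj in auto)
  also have "\<dots> \<le> card {A. A \<subseteq> insert x P \<and> shat F A}"
    by (rule card_mono[OF _ sub]) (use insert.hyps(1) in auto)
  finally show ?case .
qed


lemma card_le_d_subsets:
  assumes "finite P"
  shows "card {A. A \<subseteq> P \<and> card A \<le> d} = (\<Sum>j\<le>d. card P choose j)"
proof -
  have "{A. A \<subseteq> P \<and> card A \<le> d} = (\<Union>j\<in>{..d}. {A. A \<subseteq> P \<and> card A = j})" by auto
  moreover have "card (\<Union>j\<in>{..d}. {A. A \<subseteq> P \<and> card A = j}) = (\<Sum>j\<le>d. card {A. A \<subseteq> P \<and> card A = j})"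
    by (rule card_UN_disjoint) (use assms in auto)
  ultimately show ?thesis using n_subsets[OF assms] by simp
qed

lemma sauer:
  fixes H :: "('x \<Rightarrow> bool) set"
  assumes P: "finite P" and vc: "\<And>A. A \<subseteq> P \<Longrightarrow> shatters H A \<Longrightarrow> card A \<le> d"
  shows "card ((\<lambda>h. {x\<in>P. h x}) ` H) \<le> (\<Sum>j\<le>d. card P choose j)"
proof -
  let ?TR = "(\<lambda>h. {x\<in>P. h x}) ` H"
  have "card ?TR \<le> card {A. A \<subseteq> P \<and> shat ?TR A}" by (rule pajor[OF P]) auto
  also have "\<dots> \<le> card {A. A \<subseteq> P \<and> card A \<le> d}"
  proof (rule card_mono)
    show "finite {A. A \<subseteq> P \<and> card A \<le> d}" using P by auto
    show "{A. A \<subseteq> P \<and> shat ?TR A} \<subseteq> {A. A \<subseteq> P \<and> card A \<le> d}"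
    proof clarify
      fix A assume A: "A \<subseteq> P" "shat ?TR A"
      have "shatters H A" unfolding shatters_def
      proof (intro allI impI)
        fix B assume "B \<subseteq> A"
        then obtain h where "h \<in> H" "{x\<in>P. h x} \<inter> A = B" using A(2) unfolding shat_def by blast
        moreover have "{x\<in>P. h x} \<inter> A = {x \<in> A. h x}" using A(1) by auto
        ultimately show "\<exists>h\<in>H. {x \<in> A. h x} = B" by auto
      qed
      then show "card A \<le> d" using vc A(1) by blast
    qed
  qed
  also have "\<dots> = (\<Sum>j\<le>d. card P choose j)" by (rule card_le_d_subsets[OF P])
  finally show ?thesis .
qed

lemma binom_sum_bound:
  assumes d: "1 \<le> d" "d \<le> K"
  shows "real (\<Sum>j\<le>d. K choose j) \<le> (exp 1 * real K / real d) ^ d"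
proof -
  define x where "x = real d / real K"
  have x: "0 < x" "x \<le> 1" using d unfolding x_def by auto
  have "x ^ d * real (\<Sum>j\<le>d. K choose j) = (\<Sum>j\<le>d. real (K choose j) * x ^ d)"
    by (simp add: sum_distrib_left mult.commute)
  also have "\<dots> \<le> (\<Sum>j\<le>d. real (K choose j) * x ^ j)"
    by (intro sum_mono mult_left_mono power_decreasing) (use x in auto)
  also have "\<dots> \<le> (\<Sum>j\<le>K. real (K choose j) * x ^ j)"
    by (intro sum_mono2) (use d x in auto)
  also have "\<dots> = (x + 1) ^ K" by (simp add: binomial_ring mult.commute)
  also have "\<dots> \<le> exp x ^ K"
    by (intro power_mono) (use x in \<open>auto simp: add.commute exp_ge_add_one_self\<close>)
  also have "\<dots> = exp (real d)" using d unfolding x_def by (simp add: exp_of_nat_mult[symmetric])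
  finally have 1: "x ^ d * real (\<Sum>j\<le>d. K choose j) \<le> exp (real d)" .
  have "(exp 1 * real K / real d) ^ d = exp (real d) / x ^ d"
    unfolding x_def using d by (simp add: power_divide power_mult_distrib exp_of_nat_mult[symmetric])
  moreover have "real (\<Sum>j\<le>d. K choose j) \<le> exp (real d) / x ^ d"
    using 1 x by (simp add: pos_le_divide_eq mult.commute)
  ultimately show ?thesis by simp
qed


lemma avg_marg:
  assumes C: "finite C" "c \<in> C" and B: "\<And>x. x \<in> C \<Longrightarrow> finite (B x) \<and> B x \<noteq> {}"
  shows "avg (PiE_dflt C d B) (\<lambda>Y. F (Y c)) = avg (B c) F"
proof -
  have "avg (PiE_dflt C d B) (\<lambda>Y. F (Y c)) = avg (PiE_dflt C d B) (\<lambda>Y. \<Prod>c'\<in>C. (\<lambda>c' v. if c' = c then F v else 1) c' (Y c'))"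
    using C by (simp add: prod.delta)
  also have "\<dots> = (\<Prod>c'\<in>C. avg (B c') ((\<lambda>c' v. if c' = c then F v else 1) c'))"
    by (rule avg_prod_PiE) (use C B in auto)
  also have "\<dots> = (\<Prod>c'\<in>C. if c' = c then avg (B c) F else 1)"
    by (intro prod.cong refl) (use B in \<open>auto simp: avg_const\<close>)
  also have "\<dots> = avg (B c) F" using C by (simp add: prod.delta)
  finally show ?thesis .
qed

definition Sg :: "'c set \<Rightarrow> ('c \<Rightarrow> real) set" where
  "Sg C = PiE_dflt C 1 (\<lambda>_. {-1, 1})"

definition negs :: "'c set \<Rightarrow> ('c \<Rightarrow> real) \<Rightarrow> ('c \<Rightarrow> real)" where
  "negs C s = (\<lambda>c. if c \<in> C then - s c else 1)"

lemma negs_bij: "bij_betw (negs C) (Sg C) (Sg C)"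
  by (rule bij_betw_byWitness[where f' = "negs C"]) (auto simp: negs_def Sg_def PiE_dflt_def)

lemma avg_negs: "avg (Sg C) F = avg (Sg C) (\<lambda>s. F (negs C s))"
  by (rule avg_reindex[OF negs_bij])

lemma finite_Sg: "finite C \<Longrightarrow> finite (Sg C)" unfolding Sg_def by auto
lemma Sg_ne: "Sg C \<noteq> {}" unfolding Sg_def by auto

lemma avg_lin_Sg:
  assumes C: "finite C"
  shows "avg (Sg C) (\<lambda>s. \<Sum>c\<in>C. s c * v c) = 0"
proof -
  have "avg (Sg C) (\<lambda>s. \<Sum>c\<in>C. s c * v c) = (\<Sum>c\<in>C. avg (Sg C) (\<lambda>s. s c * v c))" by (rule avg_sum)
  also have "\<dots> = (\<Sum>c\<in>C. avg {-1, 1::real} (\<lambda>x. x * v c))"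
    unfolding Sg_def by (intro sum.cong refl avg_marg[where F = "\<lambda>x. x * v _"]) (use C in auto)
  also have "\<dots> = 0" by (simp add: avg_def)
  finally show ?thesis .
qed

lemma cosh_avg:
  assumes l: "l > 0"
  shows "avg {-1, 1::real} (\<lambda>x. exp (l * (x * v))) \<le> exp (l\<^sup>2 * v\<^sup>2 / 2)"
proof -
  have m: "avg {-1, 1::real} (\<lambda>x. x * v) = 0" by (simp add: avg_def)
  have "avg {-1, 1::real} (\<lambda>x. exp (l * (x * v - avg {-1, 1::real} (\<lambda>x. x * v)))) \<le> exp (l\<^sup>2 * (\<bar>v\<bar> - - \<bar>v\<bar>)\<^sup>2 / 8)"
    by (rule hoeffding_avg[OF _ _ _ l]) auto
  also have "(\<bar>v\<bar> - - \<bar>v\<bar>)\<^sup>2 = 4 * v\<^sup>2" by (simp add: power2_eq_square)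
  finally show ?thesis using m by simp
qed

lemma massart:
  fixes V :: "('c \<Rightarrow> real) set"
  assumes C: "finite C" and V: "finite V" "V \<noteq> {}"
    and r: "\<And>v. v \<in> V \<Longrightarrow> (\<Sum>c\<in>C. (v c)\<^sup>2) \<le> r\<^sup>2" "r \<ge> 0" and N: "real (card V) \<le> N"
  shows "avg (Sg C) (\<lambda>s. Max ((\<lambda>v. \<Sum>c\<in>C. s c * v c) ` V)) \<le> r * sqrt (2 * ln N)"
proof -
  have cV: "card V \<ge> 1" using V by (simp add: Suc_le_eq card_gt_0_iff)
  then have N1: "N \<ge> 1" using N by simp
  then have lnN: "ln N \<ge> 0" by simp
  show ?thesis
  proof (cases "card V = 1")
    case True
    then obtain v where Vv: "V = {v}" using card_1_singletonE by blast
    have "avg (Sg C) (\<lambda>s. Max ((\<lambda>v. \<Sum>c\<in>C. s c * v c) ` V)) = 0"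
      unfolding Vv by (simp add: avg_lin_Sg[OF C])
    also have "0 \<le> r * sqrt (2 * ln N)" using r(2) lnN by simp
    finally show ?thesis .
  next
    case False
    then have "card V \<ge> 2" using cV by linarith
    then have N2: "N \<ge> 2" using N by simp
    then have lnpos: "ln N > 0" by (intro ln_gt_zero) linarith
    show ?thesis
    proof (cases "r = 0")
      case True
      have "\<forall>v\<in>V. \<forall>c\<in>C. v c = 0"
      proof (intro ballI)
        fix v c assume v: "v \<in> V" and c: "c \<in> C"
        have "(\<Sum>c\<in>C. (v c)\<^sup>2) \<le> 0" using r(1)[OF v] True by simp
        moreover have "(\<Sum>c\<in>C. (v c)\<^sup>2) \<ge> 0" by (intro sum_nonneg) auto
        ultimately have "(\<Sum>c\<in>C. (v c)\<^sup>2) = 0" by linarith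
        then have "(v c)\<^sup>2 = 0" using sum_nonneg_eq_0_iff[OF C, of "\<lambda>c. (v c)\<^sup>2"] c by simp
        then show "v c = 0" by simp
      qed
      then have z: "\<And>v. v \<in> V \<Longrightarrow> (\<Sum>c\<in>C. s c * v c) = 0" for s by (intro sum.neutral) simp
      obtain v0 where "v0 \<in> V" using V(2) by blast
      have "(\<lambda>v. \<Sum>c\<in>C. s c * v c) ` V = {0}" for s
      proof
        show "(\<lambda>v. \<Sum>c\<in>C. s c * v c) ` V \<subseteq> {0}" using z[of _ s] by (simp add: image_subset_iff)
        have "0 \<in> (\<lambda>v. \<Sum>c\<in>C. s c * v c) ` V"
          by (rule rev_image_eqI[OF \<open>v0 \<in> V\<close>]) (simp add: z[OF \<open>v0 \<in> V\<close>])
        then show "{0} \<subseteq> (\<lambda>v. \<Sum>c\<in>C. s c * v c) ` V" by simp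
      qed
      then show ?thesis using True by (simp add: avg_def)
    next
      case False
      then have rpos: "r > 0" using r(2) by simp
      define l where "l = sqrt (2 * ln N) / r"
      have lpos: "l > 0" unfolding l_def using rpos lnpos by simp
      define X where "X = (\<lambda>s. Max ((\<lambda>v. \<Sum>c\<in>C. s c * v c) ` V))"
      have finS: "finite (Sg C)" "Sg C \<noteq> {}" using finite_Sg[OF C] Sg_ne by auto
      have "exp (l * avg (Sg C) X) = exp (avg (Sg C) (\<lambda>s. l * X s))" by (simp add: avg_cmult)
      also have "\<dots> \<le> avg (Sg C) (\<lambda>s. exp (l * X s))" by (rule avg_jensen_exp[OF finS])
      also have "\<dots> \<le> avg (Sg C) (\<lambda>s. \<Sum>v\<in>V. exp (l * (\<Sum>c\<in>C. s c * v c)))"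
      proof (rule avg_mono)
        fix s
        have "X s \<in> (\<lambda>v. \<Sum>c\<in>C. s c * v c) ` V" unfolding X_def using V by (intro Max_in) auto
        then obtain v0 where v0: "v0 \<in> V" "X s = (\<Sum>c\<in>C. s c * v0 c)" by auto
        show "exp (l * X s) \<le> (\<Sum>v\<in>V. exp (l * (\<Sum>c\<in>C. s c * v c)))"
          unfolding v0(2) by (rule member_le_sum[where f = "\<lambda>v. exp (l * (\<Sum>c\<in>C. s c * v c))", OF v0(1)]) (use V in auto)
      qed
      also have "\<dots> = (\<Sum>v\<in>V. avg (Sg C) (\<lambda>s. \<Prod>c\<in>C. exp (l * (s c * v c))))"
        by (simp add: avg_sum sum_distrib_left exp_sum[OF C])
      also have "\<dots> = (\<Sum>v\<in>V. \<Prod>c\<in>C. avg {-1, 1} (\<lambda>x. exp (l * (x * v c))))"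
        unfolding Sg_def by (intro sum.cong refl avg_prod_PiE[where g = "\<lambda>c x. exp (l * (x * _ c))"]) (use C in auto)
      also have "\<dots> \<le> (\<Sum>v\<in>V. \<Prod>c\<in>C. exp (l\<^sup>2 * (v c)\<^sup>2 / 2))"
        by (intro sum_mono prod_mono conjI cosh_avg lpos) (auto intro: avg_nonneg)
      also have "\<dots> = (\<Sum>v\<in>V. exp (l\<^sup>2 / 2 * (\<Sum>c\<in>C. (v c)\<^sup>2)))"
        by (simp add: exp_sum[OF C, symmetric] sum_distrib_left)
      also have "\<dots> \<le> (\<Sum>v\<in>V. exp (l\<^sup>2 / 2 * r\<^sup>2))"
        by (intro sum_mono) (use r(1) in \<open>auto intro: mult_left_mono\<close>)
      also have "\<dots> = real (card V) * exp (l\<^sup>2 / 2 * r\<^sup>2)" by simp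
      also have "\<dots> \<le> N * exp (l\<^sup>2 / 2 * r\<^sup>2)" by (intro mult_right_mono N) auto
      also have "\<dots> = exp (ln N + l\<^sup>2 / 2 * r\<^sup>2)" using N1 by (simp add: exp_add)
      finally have "l * avg (Sg C) X \<le> ln N + l\<^sup>2 / 2 * r\<^sup>2" by simp
      then have "avg (Sg C) X \<le> (ln N + l\<^sup>2 / 2 * r\<^sup>2) / l" using lpos by (simp add: field_simps)
      also have "(ln N + l\<^sup>2 / 2 * r\<^sup>2) / l = r * sqrt (2 * ln N)"
      proof -
        have s2: "(sqrt (2 * ln N))\<^sup>2 = 2 * ln N" using lnpos by simp
        have "(ln N + l\<^sup>2 / 2 * r\<^sup>2) = 2 * ln N" unfolding l_def using rpos s2 by (simp add: power_divide)
        then have "(ln N + l\<^sup>2 / 2 * r\<^sup>2) / l = 2 * ln N * r / sqrt (2 * ln N)" unfolding l_def by simp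
        also have "\<dots> = r * sqrt (2 * ln N)" using s2 lnpos
          by (simp add: field_simps power2_eq_square)
        finally show ?thesis .
      qed
      finally show ?thesis unfolding X_def .
    qed
  qed
qed


lemma max_avg:
  fixes F :: "'h \<Rightarrow> 'a \<Rightarrow> real"
  assumes H: "finite H" "H \<noteq> {}" and A: "finite A" "A \<noteq> {}"
  shows "Max ((\<lambda>h. avg A (F h)) ` H) \<le> avg A (\<lambda>y. Max ((\<lambda>h. F h y) ` H))"
proof (subst Max_le_iff)
  show "\<forall>a\<in>(\<lambda>h. avg A (F h)) ` H. a \<le> avg A (\<lambda>y. Max ((\<lambda>h. F h y) ` H))"
  proof
    fix a assume "a \<in> (\<lambda>h. avg A (F h)) ` H"
    then obtain h where h: "h \<in> H" "a = avg A (F h)" by auto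
    have "avg A (F h) \<le> avg A (\<lambda>y. Max ((\<lambda>h. F h y) ` H))"
      by (intro avg_mono Max_ge) (use H h in auto)
    then show "a \<le> avg A (\<lambda>y. Max ((\<lambda>h. F h y) ` H))" using h by simp
  qed
qed (use H in auto)

lemma max_add:
  fixes u v :: "'h \<Rightarrow> real"
  assumes H: "finite H" "H \<noteq> {}"
  shows "Max ((\<lambda>h. u h + v h) ` H) \<le> Max (u ` H) + Max (v ` H)"
proof (subst Max_le_iff)
  show "\<forall>a\<in>(\<lambda>h. u h + v h) ` H. a \<le> Max (u ` H) + Max (v ` H)"
  proof
    fix a assume "a \<in> (\<lambda>h. u h + v h) ` H"
    then obtain h where h: "h \<in> H" "a = u h + v h" by auto
    have "u h \<le> Max (u ` H)" "v h \<le> Max (v ` H)" using H h by auto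
    then show "a \<le> Max (u ` H) + Max (v ` H)" using h by simp
  qed
qed (use H in auto)

lemma Max_cong_img: "(\<And>h. h \<in> H \<Longrightarrow> u h = v h) \<Longrightarrow> Max (u ` H) = Max (v ` H)"
  by (metis image_cong)

lemma avg_pair: "avg A (\<lambda>x. avg B (\<lambda>y. F x y)) = avg (A \<times> B) (\<lambda>(x,y). F x y)"
  unfolding avg_def by (simp add: sum.cartesian_product card_cartesian_product sum_divide_distrib[symmetric]
     divide_divide_eq_left mult.commute case_prod_beta)

definition swp :: "('c \<Rightarrow> real) \<Rightarrow> ('c \<Rightarrow> nat) \<times> ('c \<Rightarrow> nat) \<Rightarrow> ('c \<Rightarrow> nat) \<times> ('c \<Rightarrow> nat)" where
  "swp s p = ((\<lambda>c. if s c = 1 then fst p c else snd p c), (\<lambda>c. if s c = 1 then snd p c else fst p c))"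

lemma swp_bij: "bij_betw (swp s) (PiE_dflt C 0 B \<times> PiE_dflt C 0 B) (PiE_dflt C 0 B \<times> PiE_dflt C 0 B)"
proof (rule bij_betw_byWitness[where f' = "swp s"])
  show "\<forall>a\<in>PiE_dflt C 0 B \<times> PiE_dflt C 0 B. swp s (swp s a) = a"
    by (auto simp: swp_def)
  show "\<forall>a\<in>PiE_dflt C 0 B \<times> PiE_dflt C 0 B. swp s (swp s a) = a"
    by (auto simp: swp_def)
  show "swp s ` (PiE_dflt C 0 B \<times> PiE_dflt C 0 B) \<subseteq> PiE_dflt C 0 B \<times> PiE_dflt C 0 B"
    by (auto simp: swp_def PiE_dflt_def)
  then show "swp s ` (PiE_dflt C 0 B \<times> PiE_dflt C 0 B) \<subseteq> PiE_dflt C 0 B \<times> PiE_dflt C 0 B" .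
qed

lemma symmetrization:
  fixes g :: "'h \<Rightarrow> 'c \<Rightarrow> nat \<Rightarrow> real" and \<beta> :: "'c \<Rightarrow> real"
  assumes C: "finite C" and n: "n > 0" and H: "finite H" "H \<noteq> {}"
    and g: "\<And>h c a. 0 \<le> g h c a \<and> g h c a \<le> 1" and \<beta>: "\<And>c. 0 \<le> \<beta> c"
    and N: "\<And>Y. Y \<in> PiE_dflt C 0 (\<lambda>_. {..<n}) \<Longrightarrow> real (card ((\<lambda>h. \<lambda>c. g h c (Y c)) ` H)) \<le> N"
  shows "avg (PiE_dflt C 0 (\<lambda>_. {..<n}))
           (\<lambda>Y. Max ((\<lambda>h. \<Sum>c\<in>C. \<beta> c * (avg {..<n} (g h c) - g h c (Y c))) ` H))
         \<le> sqrt (\<Sum>c\<in>C. (\<beta> c)\<^sup>2) * sqrt (2 * ln N)"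
proof -
  define Fl where "Fl = PiE_dflt C 0 (\<lambda>_::'c. {..<n})"
  have Fl: "finite Fl" "Fl \<noteq> {}" unfolding Fl_def using C n by auto
  have FF: "finite (Fl \<times> Fl)" "Fl \<times> Fl \<noteq> {}" using Fl by auto
  define D where "D = (\<lambda>h Y. \<Sum>c\<in>C. \<beta> c * g h c (Y c))"
  define r where "r = sqrt (\<Sum>c\<in>C. (\<beta> c)\<^sup>2) / 2"
  define R where "R = (\<lambda>s Y. Max ((\<lambda>h. \<Sum>c\<in>C. s c * (\<beta> c * (g h c (Y c) - 1/2))) ` H))"
  define W where "W = avg Fl (\<lambda>Y. avg Fl (\<lambda>Y'. Max ((\<lambda>h. D h Y' - D h Y) ` H)))"
  have step1: "(\<Sum>c\<in>C. \<beta> c * (avg {..<n} (g h c) - g h c (Y c))) = avg Fl (\<lambda>Y'. D h Y') - D h Y" for h Y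
  proof -
    have "avg Fl (\<lambda>Y'. D h Y') = (\<Sum>c\<in>C. \<beta> c * avg {..<n} (g h c))"
      unfolding D_def avg_sum avg_cmult Fl_def
      by (intro sum.cong refl arg_cong2[where f = "(*)"] avg_marg) (use C n in auto)
    then show ?thesis unfolding D_def by (simp add: sum_subtractf right_diff_distrib)
  qed
  have "avg Fl (\<lambda>Y. Max ((\<lambda>h. \<Sum>c\<in>C. \<beta> c * (avg {..<n} (g h c) - g h c (Y c))) ` H))
      = avg Fl (\<lambda>Y. Max ((\<lambda>h. avg Fl (\<lambda>Y'. D h Y' - D h Y)) ` H))"
    by (intro avg_cong Max_cong_img) (simp add: step1 avg_diff avg_const Fl)
  also have "\<dots> \<le> W" unfolding W_def by (intro avg_mono max_avg H Fl)
  finally have 1: "avg Fl (\<lambda>Y. Max ((\<lambda>h. \<Sum>c\<in>C. \<beta> c * (avg {..<n} (g h c) - g h c (Y c))) ` H)) \<le> W" .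
  have Ws: "W = avg (Fl \<times> Fl) (\<lambda>(Y,Y'). Max ((\<lambda>h. \<Sum>c\<in>C. s c * (\<beta> c * (g h c (Y' c) - g h c (Y c)))) ` H))"
    if s: "s \<in> Sg C" for s
  proof -
    have "W = avg (Fl \<times> Fl) (\<lambda>(Y,Y'). Max ((\<lambda>h. D h Y' - D h Y) ` H))"
      unfolding W_def by (rule avg_pair)
    also have "\<dots> = avg (Fl \<times> Fl) (\<lambda>p. (\<lambda>(Y,Y'). Max ((\<lambda>h. D h Y' - D h Y) ` H)) (swp s p))"
      unfolding Fl_def by (rule avg_reindex[OF swp_bij])
    also have "\<dots> = avg (Fl \<times> Fl) (\<lambda>(Y,Y'). Max ((\<lambda>h. \<Sum>c\<in>C. s c * (\<beta> c * (g h c (Y' c) - g h c (Y c)))) ` H))"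
    proof (intro avg_cong)
      fix p assume "p \<in> Fl \<times> Fl"
      obtain Y Y' where p: "p = (Y, Y')" by (cases p)
      have "D h (snd (swp s p)) - D h (fst (swp s p)) = (\<Sum>c\<in>C. s c * (\<beta> c * (g h c (Y' c) - g h c (Y c))))" for h
        unfolding D_def sum_subtractf[symmetric]
      proof (intro sum.cong refl)
        fix c assume "c \<in> C"
        then have "s c = 1 \<or> s c = -1" using s unfolding Sg_def PiE_dflt_def by auto
        then show "\<beta> c * g h c (snd (swp s p) c) - \<beta> c * g h c (fst (swp s p) c) = s c * (\<beta> c * (g h c (Y' c) - g h c (Y c)))"
          unfolding swp_def p by (auto simp: algebra_simps)
      qed
      then show "(\<lambda>(Y, Y'). Max ((\<lambda>h. D h Y' - D h Y) ` H)) (swp s p) =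
          (\<lambda>(Y, Y'). Max ((\<lambda>h. \<Sum>c\<in>C. s c * (\<beta> c * (g h c (Y' c) - g h c (Y c)))) ` H)) p"
        by (simp add: case_prod_beta p)
    qed
    finally show ?thesis .
  qed
  have SgC: "finite (Sg C)" "Sg C \<noteq> {}" using finite_Sg[OF C] Sg_ne by auto
  have "W = avg (Sg C) (\<lambda>s. W)" using SgC by (simp add: avg_const)
  also have "\<dots> = avg (Sg C) (\<lambda>s. avg (Fl \<times> Fl) (\<lambda>(Y,Y'). Max ((\<lambda>h. \<Sum>c\<in>C. s c * (\<beta> c * (g h c (Y' c) - g h c (Y c)))) ` H)))"
    by (intro avg_cong Ws)
  also have "\<dots> \<le> avg (Sg C) (\<lambda>s. avg (Fl \<times> Fl) (\<lambda>(Y,Y'). R s Y' + R (negs C s) Y))"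
  proof (intro avg_mono)
    fix s p assume s: "s \<in> Sg C" and "p \<in> Fl \<times> Fl"
    obtain Y Y' where p: "p = (Y, Y')" by (cases p)
    have e: "(\<Sum>c\<in>C. s c * (\<beta> c * (g h c (Y' c) - g h c (Y c))))
        = (\<Sum>c\<in>C. s c * (\<beta> c * (g h c (Y' c) - 1/2))) + (\<Sum>c\<in>C. negs C s c * (\<beta> c * (g h c (Y c) - 1/2)))" for h
      unfolding sum.distrib[symmetric] by (intro sum.cong refl) (simp add: negs_def algebra_simps)
    show "(\<lambda>(Y,Y'). Max ((\<lambda>h. \<Sum>c\<in>C. s c * (\<beta> c * (g h c (Y' c) - g h c (Y c)))) ` H)) p
        \<le> (\<lambda>(Y,Y'). R s Y' + R (negs C s) Y) p"
      unfolding p R_def by (simp add: e max_add[OF H])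
  qed
  also have "\<dots> = avg (Sg C) (\<lambda>s. avg Fl (R s)) + avg (Sg C) (\<lambda>s. avg Fl (R (negs C s)))"
  proof -
    have "avg (Fl \<times> Fl) (\<lambda>(Y,Y'). R s Y' + R (negs C s) Y) = avg Fl (R s) + avg Fl (R (negs C s))" for s
    proof -
      have "avg (Fl \<times> Fl) (\<lambda>(Y,Y'). R s Y' + R (negs C s) Y) = avg Fl (\<lambda>Y. avg Fl (\<lambda>Y'. R s Y' + R (negs C s) Y))"
        by (rule avg_pair[symmetric])
      also have "\<dots> = avg Fl (\<lambda>Y. avg Fl (R s) + R (negs C s) Y)"
        using Fl by (simp add: avg_add avg_const)
      also have "\<dots> = avg Fl (R s) + avg Fl (R (negs C s))" using Fl by (simp add: avg_add avg_const)
      finally show ?thesis .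
    qed
    then show ?thesis by (simp add: avg_add)
  qed
  also have "avg (Sg C) (\<lambda>s. avg Fl (R (negs C s))) = avg (Sg C) (\<lambda>s. avg Fl (R s))"
    by (rule avg_negs[symmetric])
  also have "avg (Sg C) (\<lambda>s. avg Fl (R s)) = avg Fl (\<lambda>Y. avg (Sg C) (\<lambda>s. R s Y))" by (rule avg_swap)
  also have "\<dots> \<le> avg Fl (\<lambda>Y. r * sqrt (2 * ln N))"
  proof (intro avg_mono)
    fix Y assume Y: "Y \<in> Fl"
    define V where "V = (\<lambda>h. \<lambda>c. \<beta> c * (g h c (Y c) - 1/2)) ` H"
    have RV: "R s Y = Max ((\<lambda>v. \<Sum>c\<in>C. s c * v c) ` V)" for s
      unfolding R_def V_def image_image ..
    have cardV: "real (card V) \<le> N"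
    proof -
      have "V = (\<lambda>u c. \<beta> c * (u c - 1/2)) ` ((\<lambda>h. \<lambda>c. g h c (Y c)) ` H)"
        unfolding V_def image_image ..
      then have "card V \<le> card ((\<lambda>h. \<lambda>c. g h c (Y c)) ` H)" by (simp add: card_image_le H)
      then show ?thesis using N[of Y] Y unfolding Fl_def by linarith
    qed
    have rV: "(\<Sum>c\<in>C. (v c)\<^sup>2) \<le> r\<^sup>2" if "v \<in> V" for v
    proof -
      obtain h where v: "v = (\<lambda>c. \<beta> c * (g h c (Y c) - 1/2))" using \<open>v \<in> V\<close> unfolding V_def by auto
      have "(\<Sum>c\<in>C. (v c)\<^sup>2) \<le> (\<Sum>c\<in>C. (\<beta> c)\<^sup>2 / 4)"
      proof (intro sum_mono)
        fix c
        define x where "x = g h c (Y c)"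
        have x: "0 \<le> x" "x \<le> 1" using g[of h c "Y c"] unfolding x_def by auto
        have "(x - 1/2)\<^sup>2 = (1/2)\<^sup>2 - x * (1 - x)" by (simp add: power2_eq_square algebra_simps)
        moreover have "x * (1 - x) \<ge> 0" using x by simp
        ultimately have "(g h c (Y c) - 1/2)\<^sup>2 \<le> (1/2)\<^sup>2" unfolding x_def by linarith
        then have "(\<beta> c)\<^sup>2 * (g h c (Y c) - 1/2)\<^sup>2 \<le> (\<beta> c)\<^sup>2 * (1/2)\<^sup>2" by (intro mult_left_mono) auto
        then show "(v c)\<^sup>2 \<le> (\<beta> c)\<^sup>2 / 4" unfolding v by (simp add: power_mult_distrib power_divide)
      qed
      also have "\<dots> = r\<^sup>2"
      proof -
        have "(sqrt (\<Sum>c\<in>C. (\<beta> c)\<^sup>2))\<^sup>2 = (\<Sum>c\<in>C. (\<beta> c)\<^sup>2)" by (simp add: sum_nonneg)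
        then show ?thesis unfolding r_def by (simp add: power_divide sum_divide_distrib[symmetric])
      qed
      finally show ?thesis .
    qed
    have "avg (Sg C) (\<lambda>s. R s Y) = avg (Sg C) (\<lambda>s. Max ((\<lambda>v. \<Sum>c\<in>C. s c * v c) ` V))" by (simp add: RV)
    also have "\<dots> \<le> r * sqrt (2 * ln N)"
      by (rule massart[OF C _ _ rV _ cardV]) (use H in \<open>auto simp: V_def r_def sum_nonneg\<close>)
    finally show "avg (Sg C) (\<lambda>s. R s Y) \<le> r * sqrt (2 * ln N)" .
  qed
  also have "\<dots> = r * sqrt (2 * ln N)" using Fl by (simp add: avg_const)
  finally have "W \<le> r * sqrt (2 * ln N) + r * sqrt (2 * ln N)" by simp
  then have "W \<le> sqrt (\<Sum>c\<in>C. (\<beta> c)\<^sup>2) * sqrt (2 * ln N)" unfolding r_def by (simp add: mult.commute)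
  with 1 show ?thesis unfolding Fl_def by simp
qed


lemma exp_jensen_w:
  fixes x \<mu> :: "'a \<Rightarrow> real"
  assumes A: "finite A" and \<mu>: "\<And>y. y \<in> A \<Longrightarrow> 0 \<le> \<mu> y" "sum \<mu> A = 1"
  shows "exp (\<Sum>y\<in>A. \<mu> y * x y) \<le> (\<Sum>y\<in>A. \<mu> y * exp (x y))"
proof -
  define c where "c = (\<Sum>y\<in>A. \<mu> y * x y)"
  have "(\<Sum>y\<in>A. \<mu> y * (exp c * (1 + (x y - c)))) \<le> (\<Sum>y\<in>A. \<mu> y * exp (x y))"
    by (intro sum_mono mult_left_mono exp_tangent) (use \<mu> in auto)
  also have "(\<Sum>y\<in>A. \<mu> y * (exp c * (1 + (x y - c)))) = exp c * (sum \<mu> A + (\<Sum>y\<in>A. \<mu> y * x y) - c * sum \<mu> A)"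
    by (simp add: algebra_simps sum.distrib sum_distrib_left sum_subtractf sum_distrib_right)
  also have "\<dots> = exp c" using \<mu>(2) unfolding c_def by simp
  finally show ?thesis unfolding c_def .
qed

lemma max_img_diff:
  fixes u v :: "'h \<Rightarrow> real"
  assumes H: "finite H" "H \<noteq> {}" and uv: "\<And>h. h \<in> H \<Longrightarrow> \<bar>u h - v h\<bar> \<le> c"
  shows "\<bar>Max (u ` H) - Max (v ` H)\<bar> \<le> c"
proof -
  have 1: "Max (u ` H) \<le> Max (v ` H) + c" if uv: "\<And>h. h \<in> H \<Longrightarrow> u h \<le> v h + c" for u v :: "'h \<Rightarrow> real"
  proof (subst Max_le_iff)
    show "\<forall>a\<in>u ` H. a \<le> Max (v ` H) + c"
    proof
      fix a assume "a \<in> u ` H"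
      then obtain h where "h \<in> H" "a = u h" by auto
      moreover have "v h \<le> Max (v ` H)" using H \<open>h \<in> H\<close> by auto
      ultimately show "a \<le> Max (v ` H) + c" using uv[of h] by simp
    qed
  qed (use H in auto)
  have "Max (u ` H) \<le> Max (v ` H) + c" by (rule 1) (use uv in \<open>fastforce simp: abs_le_iff\<close>)
  moreover have "Max (v ` H) \<le> Max (u ` H) + c" by (rule 1) (use uv in \<open>fastforce simp: abs_le_iff\<close>)
  ultimately show ?thesis by (simp add: abs_le_iff)
qed

lemma max_img_mix:
  fixes F :: "'y \<Rightarrow> 'h \<Rightarrow> real"
  assumes H: "finite H" "H \<noteq> {}" and A: "finite A" and \<mu>: "\<And>y. y \<in> A \<Longrightarrow> 0 \<le> \<mu> y"
  shows "Max ((\<lambda>h. \<Sum>y\<in>A. \<mu> y * F y h) ` H) \<le> (\<Sum>y\<in>A. \<mu> y * Max ((\<lambda>h. F y h) ` H))"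
proof (subst Max_le_iff)
  show "\<forall>a\<in>(\<lambda>h. \<Sum>y\<in>A. \<mu> y * F y h) ` H. a \<le> (\<Sum>y\<in>A. \<mu> y * Max ((\<lambda>h. F y h) ` H))"
  proof
    fix a assume "a \<in> (\<lambda>h. \<Sum>y\<in>A. \<mu> y * F y h) ` H"
    then obtain h where h: "h \<in> H" "a = (\<Sum>y\<in>A. \<mu> y * F y h)" by auto
    have "(\<Sum>y\<in>A. \<mu> y * F y h) \<le> (\<Sum>y\<in>A. \<mu> y * Max ((\<lambda>h. F y h) ` H))"
      by (intro sum_mono mult_left_mono \<mu> Max_ge) (use H h in auto)
    then show "a \<le> (\<Sum>y\<in>A. \<mu> y * Max ((\<lambda>h. F y h) ` H))" using h by simp
  qed
qed (use H in auto)

locale mt =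
  fixes S :: "nat \<Rightarrow> nat \<Rightarrow> 'x" and f :: "nat \<Rightarrow> 'x \<Rightarrow> bool" and H :: "('x \<Rightarrow> bool) set"
    and T n m d :: nat and I :: "nat set" and \<alpha> :: "nat \<Rightarrow> nat \<Rightarrow> real"
  assumes I_sub: "I \<subseteq> {..<T}" and alpha: "\<forall>t<T. \<alpha> t \<in> Lambda T I"
    and vc: "has_vc_dim H d" and d1: "1 \<le> d" and dm: "d \<le> m" and mn: "m \<le> n" and Tpos: "0 < T"
begin

lemma finI: "finite I" using I_sub finite_subset by blast

lemma alpha_nonneg: "t < T \<Longrightarrow> i \<in> I \<Longrightarrow> 0 \<le> \<alpha> t i"
  using alpha I_sub by (auto simp: Lambda_def)

lemma alpha_le1: "t < T \<Longrightarrow> i \<in> I \<Longrightarrow> \<alpha> t i \<le> 1"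
  using alpha I_sub by (auto simp: Lambda_def)

lemma alpha_sum: "t < T \<Longrightarrow> (\<Sum>i\<in>I. \<alpha> t i) = 1"
proof -
  assume t: "t < T"
  have "(\<Sum>i\<in>I. \<alpha> t i) = (\<Sum>i<T. \<alpha> t i)"
    by (rule sum.mono_neutral_left) (use I_sub alpha t in \<open>auto simp: Lambda_def\<close>)
  also have "\<dots> = 1" using alpha t by (auto simp: Lambda_def)
  finally show ?thesis .
qed

lemma I_ne: "I \<noteq> {}" using alpha_sum[OF Tpos] by auto

lemma k_pos: "1 \<le> card I" using I_ne finI by (simp add: Suc_le_eq card_gt_0_iff)

lemma H_ne: "H \<noteq> {}"
proof -
  obtain A where "shatters H A" using vc unfolding has_vc_dim_def by blast
  then show ?thesis unfolding shatters_def by blast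
qed

definition Pts :: "'x set" where "Pts = (\<lambda>(i,a). S i a) ` (I \<times> {..<n})"

lemma finite_Pts: "finite Pts" unfolding Pts_def using finI by auto

definition rep :: "('x \<Rightarrow> bool) \<Rightarrow> ('x \<Rightarrow> bool)" where
  "rep h = (\<lambda>x. if x \<in> Pts then h x else False)"

definition H0 :: "('x \<Rightarrow> bool) set" where "H0 = rep ` H"

lemma finite_H0: "finite H0"
proof -
  have "H0 \<subseteq> (\<lambda>A x. x \<in> A) ` Pow Pts"
  proof
    fix h assume "h \<in> H0"
    then obtain h' where "h = rep h'" unfolding H0_def by auto
    then have "h = (\<lambda>x. x \<in> {x\<in>Pts. h' x})" unfolding rep_def by auto
    then show "h \<in> (\<lambda>A x. x \<in> A) ` Pow Pts" by blast
  qed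
  then show ?thesis by (rule finite_subset) (use finite_Pts in auto)
qed

lemma H0_ne: "H0 \<noteq> {}" unfolding H0_def using H_ne by auto

definition L :: "nat \<Rightarrow> ('x \<Rightarrow> bool) \<Rightarrow> nat \<Rightarrow> real" where
  "L i h a = zero_one_loss (h (S i a)) (f i (S i a))"

lemma L_bounds: "0 \<le> L i h a \<and> L i h a \<le> 1" unfolding L_def zero_one_loss_def by auto

lemma L_rep: "i \<in> I \<Longrightarrow> a < n \<Longrightarrow> L i (rep h) a = L i h a"
  unfolding L_def rep_def Pts_def by auto

lemma err_full_L: "err_full S f n i h = avg {..<n} (L i h)"
  unfolding err_full_def avg_def L_def by simp

lemma err_full_rep: "i \<in> I \<Longrightarrow> err_full S f n i (rep h) = err_full S f n i h"
  unfolding err_full_L by (intro avg_cong) (simp add: L_rep)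

definition aff :: "nat \<Rightarrow> ('x \<Rightarrow> bool) \<Rightarrow> (nat \<Rightarrow> nat \<Rightarrow> real) \<Rightarrow> real" where
  "aff t h M = (1 / real T) * (\<Sum>i\<in>I. \<alpha> t i * (err_full S f n i h - (\<Sum>a<n. M i a * L i h a)))"

lemma aff_rep: "aff t (rep h) M = aff t h M"
  unfolding aff_def by (intro arg_cong2[where f = "(*)"] refl sum.cong) (simp_all add: err_full_rep L_rep)

definition Q :: "(nat \<Rightarrow> nat \<Rightarrow> real) \<Rightarrow> real" where
  "Q M = (\<Sum>t<T. Max ((\<lambda>h. aff t h M) ` H0))"

lemma aff_le_Max: "h \<in> H \<Longrightarrow> aff t h M \<le> Max ((\<lambda>h. aff t h M) ` H0)"
proof -
  assume "h \<in> H"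
  then have "aff t h M \<in> (\<lambda>h. aff t h M) ` H0" unfolding H0_def using aff_rep by (metis image_eqI)
  then show ?thesis using finite_H0 by auto
qed

lemma aff_mix:
  assumes A: "finite A" and \<mu>: "sum \<mu> A = 1"
  shows "aff t h (\<lambda>i a. (\<Sum>y\<in>A. \<mu> y * u y i a) / real m) = (\<Sum>y\<in>A. \<mu> y * aff t h (\<lambda>i a. u y i a / real m))"
proof -
  have "(\<Sum>y\<in>A. \<mu> y * aff t h (\<lambda>i a. u y i a / real m))
      = (1 / real T) * (\<Sum>i\<in>I. \<alpha> t i * ((\<Sum>y\<in>A. \<mu> y) * err_full S f n i h
          - (\<Sum>a<n. (\<Sum>y\<in>A. \<mu> y * u y i a) / real m * L i h a)))"
    unfolding aff_def
    by (simp add: sum_distrib_left sum_distrib_right sum_subtractf right_diff_distrib sum_divide_distrib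
        sum.swap[of _ A] algebra_simps)
  then show ?thesis using \<mu> unfolding aff_def by simp
qed

lemma Q_convex: "convexish2 (\<lambda>M. exp (l * Q (\<lambda>i a. M i a / real m)))" if l: "l > 0"
  unfolding convexish2_def
proof (intro allI impI)
  fix A :: "(nat \<Rightarrow> nat) set" and \<mu> :: "(nat \<Rightarrow> nat) \<Rightarrow> real" and u
  assume A: "finite A" "A \<noteq> {}" "\<forall>y\<in>A. 0 \<le> \<mu> y" "sum \<mu> A = 1"
  have "Q (\<lambda>i a. (\<Sum>y\<in>A. \<mu> y * u y i a) / real m) \<le> (\<Sum>y\<in>A. \<mu> y * Q (\<lambda>i a. u y i a / real m))"
  proof -
    have "Q (\<lambda>i a. (\<Sum>y\<in>A. \<mu> y * u y i a) / real m)
        = (\<Sum>t<T. Max ((\<lambda>h. \<Sum>y\<in>A. \<mu> y * aff t h (\<lambda>i a. u y i a / real m)) ` H0))"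
      unfolding Q_def by (simp add: aff_mix[OF A(1) A(4)])
    also have "\<dots> \<le> (\<Sum>t<T. \<Sum>y\<in>A. \<mu> y * Max ((\<lambda>h. aff t h (\<lambda>i a. u y i a / real m)) ` H0))"
      by (intro sum_mono max_img_mix finite_H0 H0_ne A(1)) (use A in auto)
    also have "\<dots> = (\<Sum>y\<in>A. \<mu> y * Q (\<lambda>i a. u y i a / real m))"
      unfolding Q_def by (simp add: sum_distrib_left sum.swap[of _ A])
    finally show ?thesis .
  qed
  then have "l * Q (\<lambda>i a. (\<Sum>y\<in>A. \<mu> y * u y i a) / real m) \<le> l * (\<Sum>y\<in>A. \<mu> y * Q (\<lambda>i a. u y i a / real m))"
    using l by (intro mult_left_mono) auto
  also have "\<dots> = (\<Sum>y\<in>A. \<mu> y * (l * Q (\<lambda>i a. u y i a / real m)))"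
    by (simp add: sum_distrib_left algebra_simps)
  finally have "exp (l * Q (\<lambda>i a. (\<Sum>y\<in>A. \<mu> y * u y i a) / real m)) \<le> exp (\<Sum>y\<in>A. \<mu> y * (l * Q (\<lambda>i a. u y i a / real m)))"
    by simp
  also have "\<dots> \<le> (\<Sum>y\<in>A. \<mu> y * exp (l * Q (\<lambda>i a. u y i a / real m)))"
    by (rule exp_jensen_w) (use A in auto)
  finally show "exp (l * Q (\<lambda>i a. (\<Sum>y\<in>A. \<mu> y * u y i a) / real m)) \<le> (\<Sum>y\<in>A. \<mu> y * exp (l * Q (\<lambda>i a. u y i a / real m)))" .
qed

end


lemma cnt_weighted:
  assumes "\<And>l. l < m \<Longrightarrow> Y l < n"
  shows "(\<Sum>a<n. cnt m Y a * F a) = (\<Sum>l<m. F (Y l))"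
proof -
  have "(\<Sum>a<n. cnt m Y a * F a) = (\<Sum>a<n. \<Sum>l<m. (if Y l = a then F a else 0))"
    unfolding cnt_def by (simp add: sum.If_cases sum_distrib_right[symmetric] Int_def)
  also have "\<dots> = (\<Sum>l<m. \<Sum>a<n. (if Y l = a then F a else 0))" by (rule sum.swap)
  also have "\<dots> = (\<Sum>l<m. F (Y l))" using assms by (intro sum.cong refl) (simp add: sum.delta')
  finally show ?thesis .
qed

lemma sum_times_split: "(\<Sum>c\<in>A \<times> B. F c) = (\<Sum>i\<in>A. \<Sum>l\<in>B. F (i, l))"
  by (simp add: sum.cartesian_product)

context mt
begin

definition Jset :: "(nat \<Rightarrow> nat set) set" where "Jset = PiE_dflt I {} (\<lambda>_. Zset n m)"
definition Nest :: "(nat \<Rightarrow> nat \<Rightarrow> nat) set" where "Nest = PiE_dflt I (\<lambda>_. 0) (\<lambda>_. Yset n m)"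
definition CC :: "(nat \<times> nat) set" where "CC = I \<times> {..<m}"
definition Fl :: "(nat \<times> nat \<Rightarrow> nat) set" where "Fl = PiE_dflt CC 0 (\<lambda>_. {..<n})"
definition cur :: "(nat \<times> nat \<Rightarrow> nat) \<Rightarrow> nat \<Rightarrow> nat \<Rightarrow> nat" where "cur Y = (\<lambda>i l. Y (i, l))"

definition Af :: "nat \<Rightarrow> (nat \<times> nat \<Rightarrow> nat) \<Rightarrow> ('x \<Rightarrow> bool) \<Rightarrow> real" where
  "Af t Y h = (1 / real T) * (\<Sum>i\<in>I. \<alpha> t i * err_full S f n i h)
     - (1 / (real T * real m)) * (\<Sum>c\<in>CC. \<alpha> t (fst c) * L (fst c) h (Y c))"

definition Psi :: "(nat \<times> nat \<Rightarrow> nat) \<Rightarrow> real" where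
  "Psi Y = (\<Sum>t<T. Max ((\<lambda>h. Af t Y h) ` H0))"

lemma m_pos: "1 \<le> m" using d1 dm by simp
lemma n_pos: "0 < n" using m_pos mn by simp

lemma finite_CC: "finite CC" unfolding CC_def using finI by auto
lemma card_CC: "card CC = card I * m" unfolding CC_def by (simp add: card_cartesian_product)

lemma finite_Fl: "finite Fl" unfolding Fl_def using finite_CC by auto
lemma Fl_ne: "Fl \<noteq> {}" unfolding Fl_def using n_pos by auto
lemma finite_Jset: "finite Jset" unfolding Jset_def using finI finite_Zset by auto
lemma Jset_ne: "Jset \<noteq> {}" unfolding Jset_def using Zset_ne[OF mn] by auto

lemma err_sub_MZ:
  assumes J: "J \<in> Jset" and i: "i \<in> I"
  shows "err_sub S f m (J i) i h = (\<Sum>a<n. MZ I J i a / real m * L i h a)"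
proof -
  have Ji: "J i \<subseteq> {..<n}" using J i unfolding Jset_def PiE_dflt_def Zset_def by auto
  have "(\<Sum>a<n. MZ I J i a / real m * L i h a) = (\<Sum>a<n. if a \<in> J i then L i h a / real m else 0)"
    unfolding MZ_def indv_def using i by (intro sum.cong refl) auto
  also have "\<dots> = (\<Sum>a\<in>{..<n} \<inter> J i. L i h a / real m)" by (simp add: sum.inter_restrict)
  also have "{..<n} \<inter> J i = J i" using Ji by auto
  finally show ?thesis unfolding err_sub_def L_def by (simp add: sum_divide_distrib)
qed

lemma link_J:
  assumes J: "J \<in> Jset" and h: "\<forall>t<T. h t \<in> H"
  shows "(1 / real T) * (\<Sum>t<T. err_full_w S f n I (\<alpha> t) (h t))
         - (1 / real T) * (\<Sum>t<T. err_sub_w S f m J I (\<alpha> t) (h t)) \<le> Q (\<lambda>i a. MZ I J i a / real m)"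
proof -
  have "(1 / real T) * (\<Sum>t<T. err_full_w S f n I (\<alpha> t) (h t))
         - (1 / real T) * (\<Sum>t<T. err_sub_w S f m J I (\<alpha> t) (h t))
      = (\<Sum>t<T. aff t (h t) (\<lambda>i a. MZ I J i a / real m))"
    unfolding aff_def err_full_w_def err_sub_w_def
    by (simp add: err_sub_MZ[OF J] sum_subtractf right_diff_distrib sum_distrib_left)
  also have "\<dots> \<le> Q (\<lambda>i a. MZ I J i a / real m)"
    unfolding Q_def by (intro sum_mono aff_le_Max) (use h in auto)
  finally show ?thesis .
qed

lemma dom_apply:
  assumes l: "l > 0"
  shows "avg Jset (\<lambda>J. exp (l * Q (\<lambda>i a. MZ I J i a / real m)))
         \<le> avg Nest (\<lambda>Y. exp (l * Q (\<lambda>i a. MY m I Y i a / real m)))"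
  unfolding Jset_def Nest_def
  using dominate_multi[OF finI Q_convex[OF l] m_pos mn] .

lemma cur_bij: "bij_betw cur Fl Nest"
proof (rule bij_betw_byWitness[where f' = "\<lambda>Y c. Y (fst c) (snd c)"])
  show "\<forall>a\<in>Fl. (\<lambda>Y c. Y (fst c) (snd c)) (cur a) = a" unfolding cur_def by auto
  show "\<forall>a\<in>Nest. cur ((\<lambda>Y c. Y (fst c) (snd c)) a) = a" unfolding cur_def by auto
  show "cur ` Fl \<subseteq> Nest"
    unfolding cur_def Fl_def Nest_def CC_def Yset_def PiE_dflt_def by auto
  show "(\<lambda>Y c. Y (fst c) (snd c)) ` Nest \<subseteq> Fl"
  proof clarify
    fix Y assume Y: "Y \<in> Nest"
    show "(\<lambda>c. Y (fst c) (snd c)) \<in> Fl"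
      unfolding Fl_def PiE_dflt_def
    proof (intro CollectI allI conjI impI)
      fix c :: "nat \<times> nat"
      obtain i l where c: "c = (i, l)" by (cases c)
      show "c \<in> CC \<Longrightarrow> Y (fst c) (snd c) \<in> {..<n}"
        using Y unfolding c CC_def Nest_def Yset_def PiE_dflt_def by auto
      show "c \<notin> CC \<Longrightarrow> Y (fst c) (snd c) = 0"
      proof (cases "i \<in> I")
        case True
        assume "c \<notin> CC" then have "\<not> l < m" using True unfolding c CC_def by auto
        then show ?thesis using Y True unfolding c Nest_def Yset_def PiE_dflt_def by auto
      next
        case False
        then show ?thesis using Y unfolding c Nest_def Yset_def PiE_dflt_def by auto
      qed
    qed
  qed
qed

lemma Q_Psi:
  assumes Y: "Y \<in> Fl"
  shows "Q (\<lambda>i a. MY m I (cur Y) i a / real m) = Psi Y"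
proof -
  have Yn: "Y (i, l) < n" if "i \<in> I" "l < m" for i l
    using Y that unfolding Fl_def CC_def PiE_dflt_def by auto
  have "aff t h (\<lambda>i a. MY m I (cur Y) i a / real m) = Af t Y h" for t h
  proof -
    have "(\<Sum>a<n. MY m I (cur Y) i a / real m * L i h a) = (1 / real m) * (\<Sum>l<m. L i h (Y (i, l)))"
      if i: "i \<in> I" for i
    proof -
      have "(\<Sum>a<n. MY m I (cur Y) i a / real m * L i h a) = (1 / real m) * (\<Sum>a<n. cnt m (cur Y i) a * L i h a)"
        unfolding MY_def using i by (simp add: sum_distrib_left)
      also have "(\<Sum>a<n. cnt m (cur Y i) a * L i h a) = (\<Sum>l<m. L i h (cur Y i l))"
        by (rule cnt_weighted) (use Yn i in \<open>auto simp: cur_def\<close>)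
      finally show ?thesis unfolding cur_def .
    qed
    then have "aff t h (\<lambda>i a. MY m I (cur Y) i a / real m)
        = (1 / real T) * (\<Sum>i\<in>I. \<alpha> t i * (err_full S f n i h - (1 / real m) * (\<Sum>l<m. L i h (Y (i, l)))))"
      unfolding aff_def by simp
    also have "\<dots> = Af t Y h"
    proof -
      have e: "(\<Sum>c\<in>CC. \<alpha> t (fst c) * L (fst c) h (Y c)) = (\<Sum>i\<in>I. \<alpha> t i * (\<Sum>l<m. L i h (Y (i, l))))"
      proof -
        have g: "(\<Sum>c\<in>I \<times> {..<m}. F c) = (\<Sum>i\<in>I. \<Sum>l<m. F (i, l))" for F :: "nat \<times> nat \<Rightarrow> real"
          by (simp add: sum.cartesian_product)
        show ?thesis unfolding CC_def g by (simp add: sum_distrib_left)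
      qed
      show ?thesis unfolding Af_def e
        by (simp add: right_diff_distrib sum_subtractf sum_distrib_left algebra_simps)
    qed
    finally show ?thesis .
  qed
  then show ?thesis unfolding Q_def Psi_def by simp
qed

definition cc :: "nat \<times> nat \<Rightarrow> real" where
  "cc x = (\<Sum>t<T. \<alpha> t (fst x)) / (real T * real m)"

lemma Af_diff:
  assumes y: "y \<in> Fl" and x: "x \<in> CC" and t: "t < T"
  shows "\<bar>Af t (y(x:=v)) h - Af t y h\<bar> \<le> \<alpha> t (fst x) / (real T * real m)"
proof -
  have fC: "finite CC" by (rule finite_CC)
  define S1 where "S1 = (\<Sum>c\<in>CC. \<alpha> t (fst c) * L (fst c) h ((y(x:=v)) c))"
  define S0 where "S0 = (\<Sum>c\<in>CC. \<alpha> t (fst c) * L (fst c) h (y c))"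
  have d: "S1 - S0 = \<alpha> t (fst x) * (L (fst x) h v - L (fst x) h (y x))"
  proof -
    have e: "(\<Sum>c\<in>CC - {x}. \<alpha> t (fst c) * L (fst c) h ((y(x:=v)) c)) = (\<Sum>c\<in>CC - {x}. \<alpha> t (fst c) * L (fst c) h (y c))"
      by (intro sum.cong refl) auto
    have "S1 = \<alpha> t (fst x) * L (fst x) h v + (\<Sum>c\<in>CC - {x}. \<alpha> t (fst c) * L (fst c) h ((y(x:=v)) c))"
      unfolding S1_def using sum.remove[OF fC x, of "\<lambda>c. \<alpha> t (fst c) * L (fst c) h ((y(x:=v)) c)"] by simp
    moreover have "S0 = \<alpha> t (fst x) * L (fst x) h (y x) + (\<Sum>c\<in>CC - {x}. \<alpha> t (fst c) * L (fst c) h (y c))"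
      unfolding S0_def using sum.remove[OF fC x, of "\<lambda>c. \<alpha> t (fst c) * L (fst c) h (y c)"] by simp
    ultimately show ?thesis using e by (simp add: algebra_simps)
  qed
  have "Af t (y(x:=v)) h - Af t y h = - (S1 - S0) / (real T * real m)"
    unfolding Af_def S1_def[symmetric] S0_def[symmetric] by (simp add: algebra_simps diff_divide_distrib)
  then have "Af t (y(x:=v)) h - Af t y h = - (\<alpha> t (fst x) * (L (fst x) h v - L (fst x) h (y x))) / (real T * real m)"
    using d by simp
  moreover have "\<bar>\<alpha> t (fst x) * (L (fst x) h v - L (fst x) h (y x))\<bar> \<le> \<alpha> t (fst x)"
  proof -
    have a: "0 \<le> \<alpha> t (fst x)" using alpha_nonneg[OF t] x unfolding CC_def by auto
    have "\<bar>L (fst x) h v - L (fst x) h (y x)\<bar> \<le> 1" using L_bounds[of "fst x" h v] L_bounds[of "fst x" h "y x"] by auto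
    then show ?thesis using a by (simp add: abs_mult mult_left_le)
  qed
  ultimately show ?thesis using Tpos m_pos by (simp add: abs_divide divide_right_mono)
qed

lemma Psi_bd:
  assumes y: "y \<in> Fl" and x: "x \<in> CC"
  shows "\<bar>Psi (y(x:=v)) - Psi y\<bar> \<le> cc x"
proof -
  have "\<bar>Psi (y(x:=v)) - Psi y\<bar> = \<bar>\<Sum>t<T. Max ((\<lambda>h. Af t (y(x:=v)) h) ` H0) - Max ((\<lambda>h. Af t y h) ` H0)\<bar>"
    unfolding Psi_def by (simp add: sum_subtractf)
  also have "\<dots> \<le> (\<Sum>t<T. \<bar>Max ((\<lambda>h. Af t (y(x:=v)) h) ` H0) - Max ((\<lambda>h. Af t y h) ` H0)\<bar>)"
    by (rule sum_abs)
  also have "\<dots> \<le> (\<Sum>t<T. \<alpha> t (fst x) / (real T * real m))"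
    by (intro sum_mono max_img_diff finite_H0 H0_ne Af_diff[OF y x]) auto
  also have "\<dots> = cc x" unfolding cc_def by (simp add: sum_divide_distrib)
  finally show ?thesis .
qed

lemma sum_cc: "(\<Sum>x\<in>CC. (cc x)\<^sup>2) = (norm_12 T I \<alpha>)\<^sup>2 / ((real T)\<^sup>2 * real m)"
proof -
  have nn: "0 \<le> (\<Sum>i\<in>I. (\<Sum>t<T. \<alpha> t i)\<^sup>2)" by (intro sum_nonneg) auto
  have "(\<Sum>x\<in>CC. (cc x)\<^sup>2) = (\<Sum>i\<in>I. \<Sum>l<m. ((\<Sum>t<T. \<alpha> t i) / (real T * real m))\<^sup>2)"
    unfolding CC_def cc_def sum_times_split by simp
  also have "\<dots> = (\<Sum>i\<in>I. (\<Sum>t<T. \<alpha> t i)\<^sup>2 / ((real T)\<^sup>2 * real m))"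
  proof (intro sum.cong refl)
    fix i
    show "(\<Sum>l<m. ((\<Sum>t<T. \<alpha> t i) / (real T * real m))\<^sup>2) = (\<Sum>t<T. \<alpha> t i)\<^sup>2 / ((real T)\<^sup>2 * real m)"
      using m_pos by (simp add: power_divide power_mult_distrib power2_eq_square)
  qed
  also have "\<dots> = (\<Sum>i\<in>I. (\<Sum>t<T. \<alpha> t i)\<^sup>2) / ((real T)\<^sup>2 * real m)"
    by (rule sum_divide_distrib[symmetric])
  also have "(\<Sum>i\<in>I. (\<Sum>t<T. \<alpha> t i)\<^sup>2) = (norm_12 T I \<alpha>)\<^sup>2" unfolding norm_12_def using nn by simp
  finally show ?thesis .
qed

lemma mcd_apply:
  assumes l: "l > 0"
  shows "avg Fl (\<lambda>Y. exp (l * Psi Y)) \<le> exp (l * avg Fl Psi + l\<^sup>2 * ((norm_12 T I \<alpha>)\<^sup>2 / ((real T)\<^sup>2 * real m)) / 8)"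
proof -
  have "avg Fl (\<lambda>Y. exp (l * (Psi Y - avg Fl Psi))) \<le> exp (l\<^sup>2 * (\<Sum>x\<in>CC. (cc x)\<^sup>2) / 8)"
    unfolding Fl_def
    by (rule mcdiarmid[OF finite_CC _ l]) (use n_pos Psi_bd in \<open>auto simp: Fl_def\<close>)
  then have 1: "avg Fl (\<lambda>Y. exp (l * (Psi Y - avg Fl Psi))) \<le> exp (l\<^sup>2 * ((norm_12 T I \<alpha>)\<^sup>2 / ((real T)\<^sup>2 * real m)) / 8)"
    by (simp add: sum_cc)
  have "avg Fl (\<lambda>Y. exp (l * Psi Y)) = exp (l * avg Fl Psi) * avg Fl (\<lambda>Y. exp (l * (Psi Y - avg Fl Psi)))"
    by (simp add: avg_cmult[symmetric] exp_add[symmetric] algebra_simps)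
  also have "\<dots> \<le> exp (l * avg Fl Psi) * exp (l\<^sup>2 * ((norm_12 T I \<alpha>)\<^sup>2 / ((real T)\<^sup>2 * real m)) / 8)"
    by (intro mult_left_mono 1) auto
  finally show ?thesis by (simp add: exp_add)
qed

end


context mt
begin

definition gL :: "('x \<Rightarrow> bool) \<Rightarrow> nat \<times> nat \<Rightarrow> nat \<Rightarrow> real" where
  "gL h c a = (if c \<in> CC then L (fst c) h a else 0)"

definition Nb :: real where "Nb = (exp 1 * real (card I) * real m / real d) ^ d"

lemma shatters_H0:
  assumes A: "A \<subseteq> Pts" and sh: "shatters H0 A"
  shows "shatters H A"
  unfolding shatters_def
proof (intro allI impI)
  fix B assume "B \<subseteq> A"
  then obtain h0 where "h0 \<in> H0" "{x \<in> A. h0 x} = B" using sh unfolding shatters_def by blast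
  then obtain h where h: "h \<in> H" "{x \<in> A. rep h x} = B" unfolding H0_def by auto
  have "{x \<in> A. rep h x} = {x \<in> A. h x}" using A unfolding rep_def by auto
  then show "\<exists>h\<in>H. {x \<in> A. h x} = B" using h by auto
qed

lemma card_patterns:
  assumes Y: "Y \<in> Fl"
  shows "real (card ((\<lambda>h. \<lambda>c. gL h c (Y c)) ` H0)) \<le> Nb"
proof -
  define P where "P = (\<lambda>c. S (fst c) (Y c)) ` CC"
  have finP: "finite P" unfolding P_def using finite_CC by auto
  have PPts: "P \<subseteq> Pts"
  proof
    fix x assume "x \<in> P"
    then obtain c where c: "c \<in> CC" "x = S (fst c) (Y c)" unfolding P_def by auto
    then have "fst c \<in> I" "Y c < n" using Y unfolding CC_def Fl_def PiE_dflt_def by auto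
    then show "x \<in> Pts" unfolding Pts_def c(2) by force
  qed
  have cardP: "card P \<le> card I * m" unfolding P_def using card_image_le[OF finite_CC] card_CC by metis
  define \<phi> where "\<phi> = (\<lambda>B c. if c \<in> CC then zero_one_loss (S (fst c) (Y c) \<in> B) (f (fst c) (S (fst c) (Y c))) else 0)"
  have eq: "(\<lambda>h. \<lambda>c. gL h c (Y c)) ` H0 = \<phi> ` ((\<lambda>h. {x\<in>P. h x}) ` H0)"
    unfolding image_image
  proof (intro image_cong refl ext)
    fix h c
    show "gL h c (Y c) = \<phi> {x \<in> P. h x} c"
      unfolding gL_def \<phi>_def L_def P_def by auto
  qed
  have "card ((\<lambda>h. \<lambda>c. gL h c (Y c)) ` H0) \<le> card ((\<lambda>h. {x\<in>P. h x}) ` H0)"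
    unfolding eq by (rule card_image_le) (use finite_H0 in auto)
  also have "\<dots> \<le> (\<Sum>j\<le>d. card P choose j)"
  proof (rule sauer[OF finP])
    fix A assume "A \<subseteq> P" "shatters H0 A"
    then have "shatters H A" "finite A" using shatters_H0 PPts finP finite_subset by blast+
    then show "card A \<le> d" using vc unfolding has_vc_dim_def by blast
  qed
  also have "\<dots> \<le> (\<Sum>j\<le>d. (card I * m) choose j)" by (intro sum_mono binomial_right_mono cardP)
  finally have 1: "real (card ((\<lambda>h. \<lambda>c. gL h c (Y c)) ` H0)) \<le> real (\<Sum>j\<le>d. (card I * m) choose j)"
    by (simp only: of_nat_le_iff)
  have "d \<le> card I * m" using k_pos dm by (metis le_trans mult_1 mult_le_mono1)
  from binom_sum_bound[OF d1 this] 1 show ?thesis unfolding Nb_def by (simp add: mult.assoc)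
qed

lemma Af_sym: "Af t Y h = (\<Sum>c\<in>CC. (if c \<in> CC then \<alpha> t (fst c) / (real T * real m) else 0)
                        * (avg {..<n} (gL h c) - gL h c (Y c)))"
proof -
  have "(\<Sum>c\<in>CC. (if c \<in> CC then \<alpha> t (fst c) / (real T * real m) else 0) * (avg {..<n} (gL h c) - gL h c (Y c)))
      = (\<Sum>c\<in>CC. \<alpha> t (fst c) / (real T * real m) * (err_full S f n (fst c) h - L (fst c) h (Y c)))"
  proof (intro sum.cong refl)
    fix c assume c: "c \<in> CC"
    have "avg {..<n} (gL h c) = avg {..<n} (L (fst c) h)" unfolding gL_def using c by simp
    then show "(if c \<in> CC then \<alpha> t (fst c) / (real T * real m) else 0) * (avg {..<n} (gL h c) - gL h c (Y c))
      = \<alpha> t (fst c) / (real T * real m) * (err_full S f n (fst c) h - L (fst c) h (Y c))"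
      using c by (simp add: gL_def err_full_L)
  qed
  also have "\<dots> = (\<Sum>i\<in>I. \<Sum>l<m. \<alpha> t i / (real T * real m) * err_full S f n i h)
      - (\<Sum>c\<in>CC. \<alpha> t (fst c) / (real T * real m) * L (fst c) h (Y c))"
    unfolding right_diff_distrib sum_subtractf CC_def sum_times_split by simp
  also have "(\<Sum>i\<in>I. \<Sum>l<m. \<alpha> t i / (real T * real m) * err_full S f n i h) = (1 / real T) * (\<Sum>i\<in>I. \<alpha> t i * err_full S f n i h)"
    using m_pos by (simp add: sum_distrib_left)
  also have "(\<Sum>c\<in>CC. \<alpha> t (fst c) / (real T * real m) * L (fst c) h (Y c))
       = (1 / (real T * real m)) * (\<Sum>c\<in>CC. \<alpha> t (fst c) * L (fst c) h (Y c))"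
    by (simp add: sum_distrib_left)
  finally show ?thesis unfolding Af_def by simp
qed

lemma exp_bound_t:
  assumes t: "t < T"
  shows "avg Fl (\<lambda>Y. Max ((\<lambda>h. Af t Y h) ` H0))
     \<le> (1 / real T) * sqrt (\<Sum>i\<in>I. (\<alpha> t i)\<^sup>2) * sqrt (2 * real d * ln (exp 1 * real (card I) * real m / real d) / real m)"
proof -
  define \<beta> where "\<beta> = (\<lambda>c. if c \<in> CC then \<alpha> t (fst c) / (real T * real m) else 0)"
  have "avg Fl (\<lambda>Y. Max ((\<lambda>h. Af t Y h) ` H0))
      = avg Fl (\<lambda>Y. Max ((\<lambda>h. \<Sum>c\<in>CC. \<beta> c * (avg {..<n} (gL h c) - gL h c (Y c))) ` H0))"
    unfolding \<beta>_def Af_sym ..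
  also have "\<dots> \<le> sqrt (\<Sum>c\<in>CC. (\<beta> c)\<^sup>2) * sqrt (2 * ln Nb)"
    unfolding Fl_def
  proof (rule symmetrization[OF finite_CC n_pos finite_H0 H0_ne])
    show "\<And>h c a. 0 \<le> gL h c a \<and> gL h c a \<le> 1" unfolding gL_def using L_bounds by auto
    show "\<And>c. 0 \<le> \<beta> c" unfolding \<beta>_def using alpha_nonneg[OF t] by (auto simp: CC_def)
    show "\<And>Y. Y \<in> PiE_dflt CC 0 (\<lambda>_. {..<n}) \<Longrightarrow> real (card ((\<lambda>h c. gL h c (Y c)) ` H0)) \<le> Nb"
      using card_patterns unfolding Fl_def by blast
  qed
  also have "\<dots> = (1 / real T) * sqrt (\<Sum>i\<in>I. (\<alpha> t i)\<^sup>2) * sqrt (2 * real d * ln (exp 1 * real (card I) * real m / real d) / real m)"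
  proof -
    have s: "(\<Sum>c\<in>CC. (\<beta> c)\<^sup>2) = (\<Sum>i\<in>I. (\<alpha> t i)\<^sup>2) / ((real T)\<^sup>2 * real m)"
    proof -
      have "(\<Sum>c\<in>CC. (\<beta> c)\<^sup>2) = (\<Sum>i\<in>I. \<Sum>l<m. (\<alpha> t i / (real T * real m))\<^sup>2)"
        unfolding CC_def sum_times_split \<beta>_def by (simp add: CC_def)
      also have "\<dots> = (\<Sum>i\<in>I. (\<alpha> t i)\<^sup>2 / ((real T)\<^sup>2 * real m))"
        by (intro sum.cong refl) (use m_pos in \<open>simp add: power_divide power_mult_distrib power2_eq_square\<close>)
      also have "\<dots> = (\<Sum>i\<in>I. (\<alpha> t i)\<^sup>2) / ((real T)\<^sup>2 * real m)" by (rule sum_divide_distrib[symmetric])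
      finally show ?thesis .
    qed
    have pos: "exp 1 * real (card I) * real m / real d > 0" using k_pos m_pos d1 by simp
    have lnN: "ln Nb = real d * ln (exp 1 * real (card I) * real m / real d)"
      unfolding Nb_def using pos by (simp add: ln_realpow)
    have "sqrt (\<Sum>c\<in>CC. (\<beta> c)\<^sup>2) * sqrt (2 * ln Nb)
        = sqrt (\<Sum>i\<in>I. (\<alpha> t i)\<^sup>2) / (real T * sqrt (real m)) * sqrt (2 * real d * ln (exp 1 * real (card I) * real m / real d))"
      unfolding s lnN using Tpos by (simp add: real_sqrt_divide real_sqrt_mult mult.assoc)
    also have "\<dots> = (1 / real T) * sqrt (\<Sum>i\<in>I. (\<alpha> t i)\<^sup>2) * sqrt (2 * real d * ln (exp 1 * real (card I) * real m / real d) / real m)"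
      by (simp add: real_sqrt_divide)
    finally show ?thesis .
  qed
  finally show ?thesis .
qed

lemma exp_bound:
  "avg Fl Psi \<le> (1 / real T) * norm_21 T I \<alpha> * sqrt (2 * real d * ln (exp 1 * real (card I) * real m / real d) / real m)"
proof -
  have "avg Fl Psi = (\<Sum>t<T. avg Fl (\<lambda>Y. Max ((\<lambda>h. Af t Y h) ` H0)))"
    unfolding Psi_def by (rule avg_sum)
  also have "\<dots> \<le> (\<Sum>t<T. (1 / real T) * sqrt (\<Sum>i\<in>I. (\<alpha> t i)\<^sup>2) * sqrt (2 * real d * ln (exp 1 * real (card I) * real m / real d) / real m))"
    by (intro sum_mono exp_bound_t) auto
  also have "\<dots> = (1 / real T) * norm_21 T I \<alpha> * sqrt (2 * real d * ln (exp 1 * real (card I) * real m / real d) / real m)"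
    unfolding norm_21_def by (simp add: sum_distrib_left sum_distrib_right)
  finally show ?thesis .
qed

end


lemma markov_avg:
  assumes A: "finite A" "A \<noteq> {}" and g: "\<And>x. x \<in> A \<Longrightarrow> 0 \<le> g x" "\<And>x. x \<in> A \<Longrightarrow> P x \<Longrightarrow> 1 \<le> g x"
  shows "real (card {x\<in>A. P x}) / real (card A) \<le> avg A g"
proof -
  have "real (card {x\<in>A. P x}) = (\<Sum>x\<in>A. if P x then 1 else 0)"
    using A by (simp add: sum.If_cases Int_def conj_commute)
  also have "\<dots> \<le> (\<Sum>x\<in>A. g x)" by (intro sum_mono) (use g in auto)
  finally show ?thesis unfolding avg_def by (intro divide_right_mono) auto
qed

context mt
begin

lemma norm_12_pos: "norm_12 T I \<alpha> > 0"
proof -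
  have "(\<Sum>i\<in>I. \<Sum>t<T. \<alpha> t i) = (\<Sum>t<T. \<Sum>i\<in>I. \<alpha> t i)" by (rule sum.swap)
  also have "\<dots> = real T" using alpha_sum by simp
  finally have "(\<Sum>i\<in>I. \<Sum>t<T. \<alpha> t i) \<noteq> 0" using Tpos by simp
  then obtain i where i: "i \<in> I" "(\<Sum>t<T. \<alpha> t i) \<noteq> 0" by (meson sum.neutral)
  have "0 < (\<Sum>t<T. \<alpha> t i)\<^sup>2" using i by simp
  also have "\<dots> \<le> (\<Sum>i\<in>I. (\<Sum>t<T. \<alpha> t i)\<^sup>2)"
    by (rule member_le_sum[OF i(1)]) (use finI in auto)
  finally show ?thesis unfolding norm_12_def by simp
qed

lemma main_mt:
  assumes \<delta>: "0 < \<delta>" "\<delta> < 1"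
  shows "measure_pmf.prob (subsample_pmf I n m)
     {J. \<forall>h. (\<forall>t<T. h t \<in> H) \<longrightarrow>
        (1 / real T) * (\<Sum>t<T. err_full_w S f n I (\<alpha> t) (h t))
        \<le> (1 / real T) * (\<Sum>t<T. err_sub_w S f m J I (\<alpha> t) (h t))
          + (1 / real T) * norm_21 T I \<alpha> * sqrt (2 * real d * ln (exp 1 * real (card I) * real m / real d) / real m)
          + (1 / real T) * norm_12 T I \<alpha> * sqrt (ln (4 / \<delta>) / (2 * real m))}
     \<ge> 1 - \<delta> / 4"
proof -
  define A0 where "A0 = (1 / real T) * norm_21 T I \<alpha> * sqrt (2 * real d * ln (exp 1 * real (card I) * real m / real d) / real m)"
  define L0 where "L0 = ln (4 / \<delta>)"
  define B0 where "B0 = (1 / real T) * norm_12 T I \<alpha> * sqrt (L0 / (2 * real m))"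
  define \<sigma>2 where "\<sigma>2 = (norm_12 T I \<alpha>)\<^sup>2 / ((real T)\<^sup>2 * real m)"
  define \<Phi> where "\<Phi> = (\<lambda>J. Q (\<lambda>i a. MZ I J i a / real m))"
  have L0pos: "L0 > 0" unfolding L0_def using \<delta> by simp
  have mpos: "real m > 0" using m_pos by simp
  have np: "norm_12 T I \<alpha> > 0" by (rule norm_12_pos)
  have s2pos: "\<sigma>2 > 0" unfolding \<sigma>2_def using np Tpos mpos by simp
  have B0pos: "B0 > 0" unfolding B0_def using np Tpos mpos L0pos by simp
  define l where "l = 4 * B0 / \<sigma>2"
  have lpos: "l > 0" unfolding l_def using B0pos s2pos by simp
  have key: "- l * B0 + l\<^sup>2 * \<sigma>2 / 8 = - L0"
  proof -
    have sq: "(sqrt (L0 / (2 * real m)))\<^sup>2 = L0 / (2 * real m)" using L0pos mpos by simp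
    have "- l * B0 + l\<^sup>2 * \<sigma>2 / 8 = - 2 * B0\<^sup>2 / \<sigma>2"
      unfolding l_def using s2pos by (simp add: field_simps power2_eq_square)
    also have "B0\<^sup>2 = (norm_12 T I \<alpha>)\<^sup>2 / (real T)\<^sup>2 * (L0 / (2 * real m))"
      unfolding B0_def by (simp add: power_mult_distrib power_divide sq)
    finally show ?thesis unfolding \<sigma>2_def using np Tpos mpos by (simp add: field_simps)
  qed
  have mgf: "avg Jset (\<lambda>J. exp (l * \<Phi> J)) \<le> exp (l * A0 + l\<^sup>2 * \<sigma>2 / 8)"
  proof -
    have "avg Jset (\<lambda>J. exp (l * \<Phi> J)) \<le> avg Nest (\<lambda>Y. exp (l * Q (\<lambda>i a. MY m I Y i a / real m)))"
      unfolding \<Phi>_def by (rule dom_apply[OF lpos])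
    also have "\<dots> = avg Fl (\<lambda>Y. exp (l * Q (\<lambda>i a. MY m I (cur Y) i a / real m)))"
      by (rule avg_reindex[OF cur_bij])
    also have "\<dots> = avg Fl (\<lambda>Y. exp (l * Psi Y))" by (intro avg_cong) (simp add: Q_Psi)
    also have "\<dots> \<le> exp (l * avg Fl Psi + l\<^sup>2 * \<sigma>2 / 8)" unfolding \<sigma>2_def by (rule mcd_apply[OF lpos])
    also have "\<dots> \<le> exp (l * A0 + l\<^sup>2 * \<sigma>2 / 8)"
    proof -
      have "l * avg Fl Psi \<le> l * A0" using exp_bound lpos unfolding A0_def by (intro mult_left_mono) auto
      then show ?thesis by simp
    qed
    finally show ?thesis .
  qed
  define bad where "bad = {J \<in> Jset. \<Phi> J > A0 + B0}"
  have bad_bound: "real (card bad) / real (card Jset) \<le> \<delta> / 4"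
  proof -
    have "real (card bad) / real (card Jset) \<le> avg Jset (\<lambda>J. exp (l * (\<Phi> J - (A0 + B0))))"
      unfolding bad_def
    proof (rule markov_avg[OF finite_Jset Jset_ne])
      fix J assume "\<Phi> J > A0 + B0"
      then have "l * (\<Phi> J - (A0 + B0)) \<ge> 0" using lpos by simp
      then show "1 \<le> exp (l * (\<Phi> J - (A0 + B0)))" by simp
    qed auto
    also have "\<dots> = exp (- l * (A0 + B0)) * avg Jset (\<lambda>J. exp (l * \<Phi> J))"
      by (simp add: avg_cmult[symmetric] exp_add[symmetric] algebra_simps)
    also have "\<dots> \<le> exp (- l * (A0 + B0)) * exp (l * A0 + l\<^sup>2 * \<sigma>2 / 8)"
      by (intro mult_left_mono mgf) auto
    also have "\<dots> = exp (- l * B0 + l\<^sup>2 * \<sigma>2 / 8)" by (simp add: exp_add[symmetric] algebra_simps)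
    also have "\<dots> = exp (- L0)" using key by simp
    also have "\<dots> = \<delta> / 4" unfolding L0_def using \<delta> by (simp add: exp_minus)
    finally show ?thesis .
  qed
  define good where "good = {J. \<forall>h. (\<forall>t<T. h t \<in> H) \<longrightarrow>
        (1 / real T) * (\<Sum>t<T. err_full_w S f n I (\<alpha> t) (h t))
        \<le> (1 / real T) * (\<Sum>t<T. err_sub_w S f m J I (\<alpha> t) (h t)) + A0 + B0}"
  have sub: "Jset - bad \<subseteq> Jset \<inter> good"
  proof
    fix J assume J: "J \<in> Jset - bad"
    then have "\<Phi> J \<le> A0 + B0" unfolding bad_def by auto
    then show "J \<in> Jset \<inter> good" using J link_J[of J] unfolding good_def \<Phi>_def by fastforce
  qed
  have pmf: "subsample_pmf I n m = pmf_of_set Jset"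
    unfolding subsample_pmf_def Jset_def Zset_def[symmetric]
    by (rule Pi_pmf_of_set) (use finI finite_Zset Zset_ne[OF mn] in auto)
  have "measure_pmf.prob (subsample_pmf I n m) good = real (card (Jset \<inter> good)) / real (card Jset)"
    unfolding pmf using finite_Jset Jset_ne by (simp add: measure_pmf_of_set)
  also have "\<dots> \<ge> real (card (Jset - bad)) / real (card Jset)"
    by (intro divide_right_mono of_nat_mono card_mono sub) (use finite_Jset in auto)
  also have "real (card (Jset - bad)) = real (card Jset) - real (card bad)"
  proof -
    have bs: "bad \<subseteq> Jset" unfolding bad_def by auto
    have fb: "finite bad" using finite_subset[OF bs finite_Jset] .
    have "card bad \<le> card Jset" by (rule card_mono[OF finite_Jset bs])
    then show ?thesis using card_Diff_subset[OF fb bs] by (simp add: of_nat_diff)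
  qed
  finally have "measure_pmf.prob (subsample_pmf I n m) good \<ge> 1 - real (card bad) / real (card Jset)"
    using finite_Jset Jset_ne by (simp add: diff_divide_distrib)
  then have "measure_pmf.prob (subsample_pmf I n m) good \<ge> 1 - \<delta> / 4" using bad_bound by linarith
  then show ?thesis unfolding good_def A0_def B0_def L0_def by (simp add: add.assoc)
qed

end


theorem mainTheorem4:
  fixes S :: "nat \<Rightarrow> nat \<Rightarrow> 'x"
    and f :: "nat \<Rightarrow> 'x \<Rightarrow> bool"
    and H :: "('x \<Rightarrow> bool) set"
    and T n m d k :: nat
    and I :: "nat set"
    and \<alpha> :: "nat \<Rightarrow> nat \<Rightarrow> real"
    and \<delta> :: real
  assumes I_sub: "I \<subseteq> {..<T}"
    and I_card: "card I = k"
    and alpha: "\<forall>t<T. \<alpha> t \<in> Lambda T I"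
    and vc: "has_vc_dim H d"
    and dm: "1 \<le> d" "d \<le> m" "m \<le> n"
    and delta: "0 < \<delta>" "\<delta> < 1"
  shows "measure_pmf.prob (subsample_pmf I n m)
     {J. \<forall>h. (\<forall>t<T. h t \<in> H) \<longrightarrow>
        (1 / real T) * (\<Sum>t<T. err_full_w S f n I (\<alpha> t) (h t))
        \<le> (1 / real T) * (\<Sum>t<T. err_sub_w S f m J I (\<alpha> t) (h t))
          + (1 / real T) * norm_21 T I \<alpha> * sqrt (2 * real d * ln (exp 1 * real k * real m / real d) / real m)
          + (1 / real T) * norm_12 T I \<alpha> * sqrt (ln (4 / \<delta>) / (2 * real m))}
     \<ge> 1 - \<delta> / 4"
proof (cases "T = 0")
  case True
  have "{J. \<forall>h. (\<forall>t<T. h t \<in> H) \<longrightarrow>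
        (1 / real T) * (\<Sum>t<T. err_full_w S f n I (\<alpha> t) (h t))
        \<le> (1 / real T) * (\<Sum>t<T. err_sub_w S f m J I (\<alpha> t) (h t))
          + (1 / real T) * norm_21 T I \<alpha> * sqrt (2 * real d * ln (exp 1 * real k * real m / real d) / real m)
          + (1 / real T) * norm_12 T I \<alpha> * sqrt (ln (4 / \<delta>) / (2 * real m))} = UNIV"
    using True by simp
  then show ?thesis using delta by simp
next
  case False
  interpret mt S f H T n m d I \<alpha>
    by unfold_locales (use I_sub alpha vc dm False in auto)
  show ?thesis using main_mt[OF delta] I_card by simp
qed


end
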